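(* Let $Q=(E_0,E_1,\mathbf U,\boldsymbol\alpha)$ be a quiver representation over $\mathbb{F}_q$, let $a,b\in E_0$, let $Q'=\Omega(Q,a,b)$ and $\pi=\pi^{Q'}_Q$. Let $\mathbf X\in\operatorname{End}(Q)$ and let $H$ be a subgroup of $\operatorname{Aut}(Q)$ fixing $\mathbf X$ under conjugation. Then $$\gamma\big(H^{Q'},\pi^{-1}(\mathbf X)\big)=\gamma\big(H,\mathcal I(X_a,X_b)\big),$$ where $H^{Q'}$ acts on $\pi^{-1}(\mathbf X)\subseteq\operatorname{End}(Q')$ by conjugation and $H$ acts on $\mathcal I(X_a,X_b)$ by $\mathbf g\cdot R=g_bRg_a^{-1}$.
   Context: $\gamma(G,X)$ is the number of orbits of a group $G$ on a finite set $X$. A quiver representation $Q=(E_0,E_1,\mathbf U,\boldsymbol\alpha)$: finite sets $E_0$ (vertices), $E_1$ (arrows), source/target maps $\sigma,\tau:E_1\to E_0$, finite-dimensional spaces $U_c$ ($c\in E_0$), linear maps $\alpha_e:U_{\sigma(e)}\to U_{\tau(e)}$. $\operatorname{End}(Q)$ is the ring of tuples $(X_c)_{c\in E_0}$, $X_c\in\operatorname{End}(U_c)$, with $\alpha_eX_{\sigma(e)}=X_{\tau(e)}\alpha_e$ for all $e$; $\operatorname{Aut}(Q)$ is its unit group, acting on $\operatorname{End}(Q)$ by componentwise conjugation. $Q'$ is an extension of $Q$ if its vertex set contains $E_0$, its spaces at $E_0$ coincide with those of $Q$, and restriction of any endomorphism of $Q'$ to $E_0$ is an endomorphism of $Q$;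 then $\pi^{Q'}_Q$ is this restriction map, and for $H\le\operatorname{Aut}(Q)$, $H^{Q'}=\pi^{-1}(H)\cap\operatorname{Aut}(Q')$. $\Omega(Q,a,b)$ is the extension obtained from $Q$ by adding a new vertex $c$ with a space $U'_c$ of dimension $\dim U_a+\dim U_b$ and two arrows $e_1:a\to c$, $e_2:c\to b$ whose maps form a short exact sequence $0\to U_a\to U'_c\to U_b\to 0$ (first injective, second surjective, image of first = kernel of second). $\mathcal I(X_a,X_b)=\{S\in\operatorname{Hom}(U_a,U_b):SX_a=X_bS\}$. *)

theory Defs
  imports "Jordan_Normal_Form.Matrix" "HOL-Library.FuncSet"
begin

text \<open>Finite-dimensional spaces over a finite field are modelled as coordinate spaces
  'a^n (column vectors), linear maps as matrices.\<close>

record ('v, 'e, 'a) quiver_rep =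
  verts :: "'v set"
  arrs  :: "'e set"
  src   :: "'e \<Rightarrow> 'v"
  tgt   :: "'e \<Rightarrow> 'v"
  dim   :: "'v \<Rightarrow> nat"
  amap  :: "'e \<Rightarrow> 'a mat"

definition is_quiver_rep :: "('v, 'e, 'a) quiver_rep \<Rightarrow> bool" where
  "is_quiver_rep Q \<longleftrightarrow> finite (verts Q) \<and> finite (arrs Q) \<and>
     (\<forall>e\<in>arrs Q. src Q e \<in> verts Q \<and> tgt Q e \<in> verts Q \<and>
        amap Q e \<in> carrier_mat (dim Q (tgt Q e)) (dim Q (src Q e)))"

definition End_Q :: "('v, 'e, 'a::semiring_1) quiver_rep \<Rightarrow> ('v \<Rightarrow> 'a mat) set" where
  "End_Q Q = {X. X \<in> extensional (verts Q) \<and>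
     (\<forall>c\<in>verts Q. X c \<in> carrier_mat (dim Q c) (dim Q c)) \<and>
     (\<forall>e\<in>arrs Q. amap Q e * X (src Q e) = X (tgt Q e) * amap Q e)}"

definition Aut_Q :: "('v, 'e, 'a::semiring_1) quiver_rep \<Rightarrow> ('v \<Rightarrow> 'a mat) set" where
  "Aut_Q Q = {X \<in> End_Q Q. \<exists>Y\<in>End_Q Q. \<forall>c\<in>verts Q.
      X c * Y c = 1\<^sub>m (dim Q c) \<and> Y c * X c = 1\<^sub>m (dim Q c)}"

definition matinv :: "'a::semiring_1 mat \<Rightarrow> 'a mat" where
  "matinv A = (THE B. B \<in> carrier_mat (dim_row A) (dim_row A) \<and>
      A * B = 1\<^sub>m (dim_row A) \<and> B * A = 1\<^sub>m (dim_row A))"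

definition tuple_one :: "('v, 'e, 'a::semiring_1) quiver_rep \<Rightarrow> 'v \<Rightarrow> 'a mat" where
  "tuple_one Q = (\<lambda>c\<in>verts Q. 1\<^sub>m (dim Q c))"

definition tuple_mult :: "('v, 'e, 'a::semiring_1) quiver_rep \<Rightarrow> ('v \<Rightarrow> 'a mat) \<Rightarrow> ('v \<Rightarrow> 'a mat) \<Rightarrow> 'v \<Rightarrow> 'a mat" where
  "tuple_mult Q g h = (\<lambda>c\<in>verts Q. g c * h c)"

definition tuple_inv :: "('v, 'e, 'a::semiring_1) quiver_rep \<Rightarrow> ('v \<Rightarrow> 'a mat) \<Rightarrow> 'v \<Rightarrow> 'a mat" where
  "tuple_inv Q g = (\<lambda>c\<in>verts Q. matinv (g c))"

definition is_subgroup_Aut :: "('v \<Rightarrow> 'a mat) set \<Rightarrow> ('v, 'e, 'a::semiring_1) quiver_rep \<Rightarrow> bool" where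
  "is_subgroup_Aut H Q \<longleftrightarrow> H \<subseteq> Aut_Q Q \<and> tuple_one Q \<in> H \<and>
     (\<forall>g\<in>H. \<forall>h\<in>H. tuple_mult Q g h \<in> H) \<and> (\<forall>g\<in>H. tuple_inv Q g \<in> H)"

definition conj_act :: "('v, 'e, 'a::semiring_1) quiver_rep \<Rightarrow> ('v \<Rightarrow> 'a mat) \<Rightarrow> ('v \<Rightarrow> 'a mat) \<Rightarrow> 'v \<Rightarrow> 'a mat" where
  "conj_act Q g X = (\<lambda>c\<in>verts Q. g c * X c * matinv (g c))"

definition num_orbits :: "'g set \<Rightarrow> ('g \<Rightarrow> 'x \<Rightarrow> 'x) \<Rightarrow> 'x set \<Rightarrow> nat" where
  "num_orbits G act S = card ((\<lambda>x. (\<lambda>g. act g x) ` G) ` S)"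

definition restr_to :: "('v, 'e, 'a) quiver_rep \<Rightarrow> ('v \<Rightarrow> 'a mat) \<Rightarrow> 'v \<Rightarrow> 'a mat" where
  "restr_to Q X = restrict X (verts Q)"

definition lift_group :: "('v, 'e, 'a::semiring_1) quiver_rep \<Rightarrow> ('v, 'e, 'a) quiver_rep \<Rightarrow> ('v \<Rightarrow> 'a mat) set \<Rightarrow> ('v \<Rightarrow> 'a mat) set" where
  "lift_group Q' Q H = {g \<in> Aut_Q Q'. restr_to Q g \<in> H}"

text \<open>Q' is (a choice of) Omega(Q,a,b), with new vertex c and new arrows e1 : a \<rightarrow> c, e2 : c \<rightarrow> b
  whose maps form a short exact sequence 0 \<rightarrow> U_a \<rightarrow> U'_c \<rightarrow> U_b \<rightarrow> 0.\<close>
definition is_Omega :: "('v, 'e, 'a::field) quiver_rep \<Rightarrow> 'v \<Rightarrow> 'v \<Rightarrow> ('v, 'e, 'a) quiver_rep \<Rightarrow> bool" where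
  "is_Omega Q a b Q' \<longleftrightarrow> (\<exists>c e1 e2.
     c \<notin> verts Q \<and> e1 \<notin> arrs Q \<and> e2 \<notin> arrs Q \<and> e1 \<noteq> e2 \<and>
     verts Q' = insert c (verts Q) \<and> arrs Q' = arrs Q \<union> {e1, e2} \<and>
     (\<forall>e\<in>arrs Q. src Q' e = src Q e \<and> tgt Q' e = tgt Q e \<and> amap Q' e = amap Q e) \<and>
     (\<forall>v\<in>verts Q. dim Q' v = dim Q v) \<and>
     dim Q' c = dim Q a + dim Q b \<and>
     src Q' e1 = a \<and> tgt Q' e1 = c \<and> src Q' e2 = c \<and> tgt Q' e2 = b \<and>
     amap Q' e1 \<in> carrier_mat (dim Q' c) (dim Q a) \<and>
     amap Q' e2 \<in> carrier_mat (dim Q b) (dim Q' c) \<and>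
     (\<forall>u\<in>carrier_vec (dim Q a). amap Q' e1 *\<^sub>v u = 0\<^sub>v (dim Q' c) \<longrightarrow> u = 0\<^sub>v (dim Q a)) \<and>
     (\<forall>w\<in>carrier_vec (dim Q b). \<exists>v\<in>carrier_vec (dim Q' c). amap Q' e2 *\<^sub>v v = w) \<and>
     (\<forall>v\<in>carrier_vec (dim Q' c). amap Q' e2 *\<^sub>v v = 0\<^sub>v (dim Q b) \<longleftrightarrow>
          (\<exists>u\<in>carrier_vec (dim Q a). v = amap Q' e1 *\<^sub>v u)))"

definition intertw :: "nat \<Rightarrow> nat \<Rightarrow> 'a::semiring_1 mat \<Rightarrow> 'a mat \<Rightarrow> 'a mat set" where
  "intertw na nb Xa Xb = {S \<in> carrier_mat nb na. S * Xa = Xb * S}"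

end

theory Submission imports Defs "HOL-Algebra.Group_Action" begin


lemma burnside_gen:
  fixes G :: "'g set" and mult :: "'g \<Rightarrow> 'g \<Rightarrow> 'g" and one :: 'g
    and act :: "'g \<Rightarrow> 'x \<Rightarrow> 'x" and E :: "'x set"
  assumes fG: "finite G" and fE: "finite E" and one: "one \<in> G"
    and mc: "\<And>g h. g \<in> G \<Longrightarrow> h \<in> G \<Longrightarrow> mult g h \<in> G"
    and ma: "\<And>g h k. g \<in> G \<Longrightarrow> h \<in> G \<Longrightarrow> k \<in> G \<Longrightarrow> mult (mult g h) k = mult g (mult h k)"
    and lo: "\<And>g. g \<in> G \<Longrightarrow> mult one g = g"
    and li: "\<And>g. g \<in> G \<Longrightarrow> \<exists>h\<in>G. mult h g = one"
    and a1: "\<And>x. x \<in> E \<Longrightarrow> act one x = x"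
    and am: "\<And>g h x. g \<in> G \<Longrightarrow> h \<in> G \<Longrightarrow> x \<in> E \<Longrightarrow> act (mult g h) x = act g (act h x)"
    and ac: "\<And>g x. g \<in> G \<Longrightarrow> x \<in> E \<Longrightarrow> act g x \<in> E"
  shows "num_orbits G act E * card G = (\<Sum>g\<in>G. card {x\<in>E. act g x = x})"
proof -
  let ?G = "\<lparr>carrier = G, mult = mult, one = one\<rparr>"
  let ?phi = "\<lambda>g. restrict (act g) E"
  have grp: "group ?G"
    by (rule groupI) (auto simp: mc one ma lo li)
  have bij: "?phi g \<in> Bij E" if g: "g \<in> G" for g
  proof -
    obtain h where h: "h \<in> G" "mult h g = one" using li[OF g] by auto
    have gh: "mult g h = one"
    proof -
      interpret group ?G by (rule grp)
      have "h \<otimes>\<^bsub>?G\<^esub> g = \<one>\<^bsub>?G\<^esub>" using h by simp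
      hence "inv\<^bsub>?G\<^esub> g = h" using g h by (simp add: inv_equality)
      thus ?thesis using r_inv[of g] g by simp
    qed
    show ?thesis unfolding Bij_def
      apply (intro IntI)
      apply simp
      apply (simp add: bij_betw_def)
      apply (intro conjI)
       apply (rule inj_on_inverseI[where g = "act h"])
       apply (metis a1 am h g)
      apply (auto simp: ac g image_def)
      apply (rule_tac x = "act h x" in bexI)
       apply (metis a1 am h g gh)
      by (simp add: ac h)
  qed
  have ga: "group_action ?G E ?phi"
    unfolding group_action_def group_hom_def group_hom_axioms_def
  proof (intro conjI grp group_BijGroup)
    show "?phi \<in> hom ?G (BijGroup E)"
    proof (rule homI)
      show "?phi x \<in> carrier (BijGroup E)" if "x \<in> carrier ?G" for x
        using bij that by (simp add: BijGroup_def)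
      show "?phi (x \<otimes>\<^bsub>?G\<^esub> y) = ?phi x \<otimes>\<^bsub>BijGroup E\<^esub> ?phi y"
        if "x \<in> carrier ?G" "y \<in> carrier ?G" for x y
        using that bij[of x] bij[of y]
        by (auto simp: BijGroup_def compose_def am ac intro!: ext)
    qed
  qed
  have orb: "orbits ?G E ?phi = (\<lambda>x. (\<lambda>g. act g x) ` G) ` E"
    unfolding orbits_def orbit_def by (auto simp: image_def)
  have "card (orbits ?G E ?phi) * order ?G = (\<Sum>g \<in> carrier ?G. card(invariants E ?phi g))"
    by (rule group_action.burnside[OF ga]) (auto simp: fG fE)
  moreover have "invariants E ?phi g = {x\<in>E. act g x = x}" for g
    unfolding invariants_def by auto
  ultimately show ?thesis by (simp add: num_orbits_def orb order_def)
qed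


lemma fiber_count:
  fixes f :: "'x \<Rightarrow> 'a::{finite,field}" and add :: "'x \<Rightarrow> 'x \<Rightarrow> 'x" and w :: "'a \<Rightarrow> 'x"
  assumes fA: "finite A"
    and ac: "\<And>x y. x \<in> A \<Longrightarrow> y \<in> A \<Longrightarrow> add x y \<in> A"
    and fa: "\<And>x y. x \<in> A \<Longrightarrow> y \<in> A \<Longrightarrow> f (add x y) = f x + f y"
    and wA: "\<And>c. w c \<in> A" and fw: "\<And>c. f (w c) = c"
    and inv: "\<And>x c. x \<in> A \<Longrightarrow> add (add x (w c)) (w (- c)) = x"
  shows "card {x\<in>A. f x = 0} * card (UNIV::'a set) = card A"
proof -
  have fib: "card {x\<in>A. f x = c} = card {x\<in>A. f x = 0}" for c
  proof -
    have "bij_betw (\<lambda>x. add x (w c)) {x\<in>A. f x = 0} {x\<in>A. f x = c}"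
    proof (rule bij_betw_byWitness[where f' = "\<lambda>x. add x (w (- c))"])
      show "\<forall>x\<in>{x \<in> A. f x = 0}. add (add x (w c)) (w (- c)) = x" using inv by blast
      show "\<forall>x\<in>{x \<in> A. f x = c}. add (add x (w (- c))) (w c) = x"
      proof
        fix x assume "x \<in> {x \<in> A. f x = c}"
        hence "add (add x (w (- c))) (w (- (- c))) = x" using inv by blast
        thus "add (add x (w (- c))) (w c) = x" by simp
      qed
      show "(\<lambda>x. add x (w c)) ` {x \<in> A. f x = 0} \<subseteq> {x \<in> A. f x = c}"
      proof
        fix y assume "y \<in> (\<lambda>x. add x (w c)) ` {x \<in> A. f x = 0}"
        then obtain x where x: "x \<in> A" "f x = 0" "y = add x (w c)" by blast
        show "y \<in> {x \<in> A. f x = c}" using x ac[OF x(1) wA] fa[OF x(1) wA] fw by simp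
      qed
      show "(\<lambda>x. add x (w (- c))) ` {x \<in> A. f x = c} \<subseteq> {x \<in> A. f x = 0}"
      proof
        fix y assume "y \<in> (\<lambda>x. add x (w (- c))) ` {x \<in> A. f x = c}"
        then obtain x where x: "x \<in> A" "f x = c" "y = add x (w (- c))" by blast
        show "y \<in> {x \<in> A. f x = 0}" using x ac[OF x(1) wA] fa[OF x(1) wA] fw by simp
      qed
    qed
    thus ?thesis by (simp add: bij_betw_same_card)
  qed
  have "card A = (\<Sum>c\<in>UNIV. \<Sum>x\<in>{x. x \<in> A \<and> f x = c}. 1)"
    unfolding card_eq_sum by (rule sum.group[symmetric]) (simp_all add: fA)
  also have "\<dots> = (\<Sum>c\<in>(UNIV::'a set). card {x\<in>A. f x = 0})"
  proof (rule sum.cong[OF refl])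
    fix c show "(\<Sum>x\<in>{x. x \<in> A \<and> f x = c}. 1) = card {x\<in>A. f x = 0}"
    proof -
      have "(\<Sum>x\<in>{x. x \<in> A \<and> f x = c}. 1) = card {x\<in>A. f x = c}" by simp
      also have "\<dots> = card {x\<in>A. f x = 0}" by (rule fib)
      finally show ?thesis .
    qed
  qed
  finally show ?thesis by simp
qed

lemma card_filter_sum: "finite A \<Longrightarrow> card {x\<in>A. P x} = (\<Sum>x\<in>A. if P x then 1 else 0)"
  by (simp add: sum.If_cases Int_def)

lemma double_count:
  fixes beta :: "'s \<Rightarrow> 'x \<Rightarrow> 'a::{finite,field}"
  assumes fA: "finite A" and fC: "finite C" and K1: "K1 \<subseteq> A" and K2: "K2 \<subseteq> C"
    and h1: "\<And>x. x \<in> A \<Longrightarrow> x \<notin> K1 \<Longrightarrow> card {S\<in>C. beta S x = 0} * card (UNIV::'a set) = card C"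
    and h1': "\<And>x S. x \<in> K1 \<Longrightarrow> S \<in> C \<Longrightarrow> beta S x = 0"
    and h2: "\<And>S. S \<in> C \<Longrightarrow> S \<notin> K2 \<Longrightarrow> card {x\<in>A. beta S x = 0} * card (UNIV::'a set) = card A"
    and h2': "\<And>x S. S \<in> K2 \<Longrightarrow> x \<in> A \<Longrightarrow> beta S x = 0"
  shows "card K1 * card C = card K2 * card A"
proof -
  let ?q = "card (UNIV::'a set)"
  define Z where "Z = (\<Sum>x\<in>A. card {S\<in>C. beta S x = 0})"
  have Z2: "Z = (\<Sum>S\<in>C. card {x\<in>A. beta S x = 0})"
    unfolding Z_def card_filter_sum[OF fC] card_filter_sum[OF fA] by (rule sum.swap)
  have fK1: "finite K1" using K1 fA finite_subset by blast
  have fK2: "finite K2" using K2 fC finite_subset by blast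
  have e1: "Z * ?q = card K1 * card C * ?q + (card A - card K1) * card C"
  proof -
    have "Z = (\<Sum>x\<in>K1. card {S\<in>C. beta S x = 0}) + (\<Sum>x\<in>A - K1. card {S\<in>C. beta S x = 0})"
      unfolding Z_def using sum.subset_diff[OF K1 fA] by (simp add: add.commute)
    also have "(\<Sum>x\<in>K1. card {S\<in>C. beta S x = 0}) = card K1 * card C"
    proof -
      have "(\<Sum>x\<in>K1. card {S\<in>C. beta S x = 0}) = (\<Sum>x\<in>K1. card C)"
        by (rule sum.cong[OF refl]) (use h1' in \<open>auto intro!: arg_cong[where f=card]\<close>)
      thus ?thesis by simp
    qed
    finally have "Z * ?q = card K1 * card C * ?q + (\<Sum>x\<in>A - K1. card {S\<in>C. beta S x = 0} * ?q)"
      by (simp add: sum_distrib_left algebra_simps)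
    also have "(\<Sum>x\<in>A - K1. card {S\<in>C. beta S x = 0} * ?q) = (\<Sum>x\<in>A - K1. card C)"
      using h1 by simp
    also have "\<dots> = (card A - card K1) * card C" using card_Diff_subset[OF fK1 K1] by simp
    finally show ?thesis .
  qed
  have e2: "Z * ?q = card K2 * card A * ?q + (card C - card K2) * card A"
  proof -
    have "Z = (\<Sum>S\<in>K2. card {x\<in>A. beta S x = 0}) + (\<Sum>S\<in>C - K2. card {x\<in>A. beta S x = 0})"
      unfolding Z2 using sum.subset_diff[OF K2 fC] by (simp add: add.commute)
    also have "(\<Sum>S\<in>K2. card {x\<in>A. beta S x = 0}) = card K2 * card A"
    proof -
      have "(\<Sum>S\<in>K2. card {x\<in>A. beta S x = 0}) = (\<Sum>S\<in>K2. card A)"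
        by (rule sum.cong[OF refl]) (use h2' in \<open>auto intro!: arg_cong[where f=card]\<close>)
      thus ?thesis by simp
    qed
    finally have "Z * ?q = card K2 * card A * ?q + (\<Sum>S\<in>C - K2. card {x\<in>A. beta S x = 0} * ?q)"
      by (simp add: sum_distrib_left algebra_simps)
    also have "(\<Sum>S\<in>C - K2. card {x\<in>A. beta S x = 0} * ?q) = (\<Sum>S\<in>C - K2. card A)"
      using h2 by simp
    also have "\<dots> = (card C - card K2) * card A" using card_Diff_subset[OF fK2 K2] by simp
    finally show ?thesis .
  qed
  have c1: "card K1 \<le> card A" using card_mono[OF fA K1] .
  have c2: "card K2 \<le> card C" using card_mono[OF fC K2] .
  have q2: "?q \<ge> 2"
  proof -
    have "{0::'a, 1} \<subseteq> UNIV" by simp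
    hence "card {0::'a,1} \<le> ?q" by (rule card_mono[OF finite_UNIV])
    thus ?thesis by simp
  qed
  have d1: "(card A - card K1) * card C + card K1 * card C = card A * card C"
    using c1 by (metis add_mult_distrib le_add_diff_inverse2)
  have d2: "(card C - card K2) * card A + card K2 * card A = card C * card A"
    using c2 by (metis add_mult_distrib le_add_diff_inverse2)
  have "card K1 * card C * ?q + card A * card C = Z * ?q + card K1 * card C"
    using e1 d1 by simp
  moreover have "card K2 * card A * ?q + card A * card C = Z * ?q + card K2 * card A"
    using e2 d2 by (simp add: mult.commute)
  ultimately have "card K1 * card C * ?q + card K2 * card A = card K2 * card A * ?q + card K1 * card C"
    by linarith
  hence "card K1 * card C * (?q - 1) = card K2 * card A * (?q - 1)"
    using q2 by (simp add: diff_mult_distrib2)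
  moreover have "?q - 1 \<noteq> 0" using q2 by simp
  ultimately show ?thesis using mult_right_cancel by blast
qed
definition pr :: "'a::comm_ring_1 mat \<Rightarrow> 'a mat \<Rightarrow> 'a" where
  "pr S V = (\<Sum>i<dim_row S. \<Sum>j<dim_col S. S $$ (i,j) * V $$ (j,i))"

lemma pr_swap: assumes "S \<in> carrier_mat r c" "V \<in> carrier_mat c r"
  shows "pr S V = pr V S"
  using assms unfolding pr_def by (simp add: sum.swap[of _ "{..<r}"] mult.commute)

lemma pr_add1: assumes "S1 \<in> carrier_mat r c" "S2 \<in> carrier_mat r c"
  shows "pr (S1 + S2) V = pr S1 V + pr S2 V"
  using assms unfolding pr_def by (simp add: distrib_right sum.distrib)

lemma pr_add2: assumes "S \<in> carrier_mat r c" "V1 \<in> carrier_mat c r" "V2 \<in> carrier_mat c r"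
  shows "pr S (V1 + V2) = pr S V1 + pr S V2"
  using assms unfolding pr_def by (simp add: distrib_left sum.distrib)

lemma pr_minus1: assumes "S1 \<in> carrier_mat r c" "S2 \<in> carrier_mat r c"
  shows "pr (S1 - S2) V = pr S1 V - pr S2 V"
  using assms unfolding pr_def by (simp add: left_diff_distrib sum_subtractf)

lemma pr_minus2: assumes "S \<in> carrier_mat r c" "V1 \<in> carrier_mat c r" "V2 \<in> carrier_mat c r"
  shows "pr S (V1 - V2) = pr S V1 - pr S V2"
  using assms unfolding pr_def by (simp add: right_diff_distrib sum_subtractf)

lemma pr_smult2: assumes "S \<in> carrier_mat r c" "V \<in> carrier_mat c r"
  shows "pr S (k \<cdot>\<^sub>m V) = k * pr S V"
  using assms unfolding pr_def by (simp add: sum_distrib_left ac_simps)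

lemma pr_zero2: assumes "S \<in> carrier_mat r c"
  shows "pr S (0\<^sub>m c r) = 0"
  using assms unfolding pr_def by simp

lemma pr_zero1: "pr (0\<^sub>m r c) V = 0"
  unfolding pr_def by simp

lemma pr_assoc: assumes S: "S \<in> carrier_mat r c" and A: "A \<in> carrier_mat c d" and V: "V \<in> carrier_mat d r"
  shows "pr S (A * V) = pr (S * A) V"
proof -
  have "pr S (A * V) = (\<Sum>i<r. \<Sum>j<c. \<Sum>k<d. S $$ (i,j) * (A $$ (j,k) * V $$ (k,i)))"
    using assms unfolding pr_def
    by (simp add: scalar_prod_def sum_distrib_left atLeast0LessThan)
  also have "\<dots> = (\<Sum>i<r. \<Sum>k<d. \<Sum>j<c. S $$ (i,j) * A $$ (j,k) * V $$ (k,i))"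
    by (rule sum.cong[OF refl], subst sum.swap) (simp add: mult.assoc)
  also have "\<dots> = pr (S * A) V"
    using assms unfolding pr_def
    by (simp add: scalar_prod_def sum_distrib_right atLeast0LessThan)
  finally show ?thesis .
qed

lemma nonzero_entry: assumes "S \<in> carrier_mat r c" "S \<noteq> 0\<^sub>m r c"
  shows "\<exists>i j. i < r \<and> j < c \<and> S $$ (i,j) \<noteq> 0"
  using assms by (metis carrier_matD(1) carrier_matD(2) eq_matI index_zero_mat(1) index_zero_mat(2) index_zero_mat(3))

lemma pr_nondeg: fixes S :: "'a::field mat"
  assumes S: "S \<in> carrier_mat r c" "S \<noteq> 0\<^sub>m r c"
  shows "\<exists>V\<in>carrier_mat c r. pr S V = 1"
proof -
  obtain i j where ij: "i < r" "j < c" "S $$ (i,j) \<noteq> 0" using nonzero_entry[OF S] by blast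
  define V where "V = mat c r (\<lambda>(k,l). if k = j \<and> l = i then 1 / S $$ (i,j) else 0)"
  have "pr S V = (\<Sum>i'<r. \<Sum>j'<c. if i' = i \<and> j' = j then 1 else 0)"
    using S ij unfolding pr_def V_def
    by (intro sum.cong refl) (auto simp: field_simps)
  also have "\<dots> = (\<Sum>i'<r. if i' = i then (\<Sum>j'<c. if j' = j then 1 else 0) else 0)"
    by (rule sum.cong) auto
  also have "\<dots> = 1" using ij by simp
  finally show ?thesis unfolding V_def by (intro bexI[of _ V]) (auto simp: V_def)
qed

lemma mat_diff_zero: fixes A :: "'a::ab_group_add mat"
  assumes "A \<in> carrier_mat r c" "B \<in> carrier_mat r c" "A - B = 0\<^sub>m r c" shows "A = B"
proof (rule eq_matI)
  fix i j assume "i < dim_row B" "j < dim_col B"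
  hence "(A - B) $$ (i,j) = 0" using assms by simp
  moreover have "(A - B) $$ (i,j) = A $$ (i,j) - B $$ (i,j)"
    using \<open>i < dim_row B\<close> \<open>j < dim_col B\<close> by simp
  ultimately show "A $$ (i,j) = B $$ (i,j)" by simp
qed (use assms in auto)

lemma smult_cancel_mat: fixes S :: "'a::field mat"
  assumes "S \<in> carrier_mat r c" "E \<in> carrier_mat r c"
  shows "S + k \<cdot>\<^sub>m E + (- k) \<cdot>\<^sub>m E = S"
  using assms by (intro eq_matI) (auto simp: algebra_simps)

lemma pr_key:
  fixes ga Xa :: "'a::field mat"
  assumes ga: "ga \<in> carrier_mat na na" and Xa: "Xa \<in> carrier_mat na na"
    and gb: "gb \<in> carrier_mat nb nb" and Xb: "Xb \<in> carrier_mat nb nb"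
    and S: "S \<in> carrier_mat nb na" and T: "T \<in> carrier_mat na nb" and M: "M \<in> carrier_mat na nb"
  shows "pr S (ga * T + M * Xb - (Xa * M + T * gb)) = pr (S * ga - gb * S) T + pr (Xb * S - S * Xa) M"
proof -
  have c: "ga * T \<in> carrier_mat na nb" "M * Xb \<in> carrier_mat na nb" "Xa * M \<in> carrier_mat na nb"
     "T * gb \<in> carrier_mat na nb" "S * ga \<in> carrier_mat nb na" "gb * S \<in> carrier_mat nb na"
     "Xb * S \<in> carrier_mat nb na" "S * Xa \<in> carrier_mat nb na" using assms by auto
  have e1: "pr S (ga * T) = pr (S * ga) T" by (rule pr_assoc[OF S ga T])
  have e2: "pr S (M * Xb) = pr (Xb * S) M"
    using pr_swap[OF S c(2)] pr_assoc[OF M Xb S] pr_swap[OF M c(7)] by simp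
  have e3: "pr S (Xa * M) = pr (S * Xa) M" by (rule pr_assoc[OF S Xa M])
  have e4: "pr S (T * gb) = pr (gb * S) T"
    using pr_swap[OF S c(4)] pr_assoc[OF T gb S] pr_swap[OF T c(6)] by simp
  have "pr S (ga * T + M * Xb - (Xa * M + T * gb)) = pr S (ga * T) + pr S (M * Xb) - (pr S (Xa * M) + pr S (T * gb))"
    using c S by (simp add: pr_minus2[of _ nb na] pr_add2[of _ nb na])
  also have "\<dots> = pr (S * ga - gb * S) T + pr (Xb * S - S * Xa) M"
    using c by (simp add: e1 e2 e3 e4 pr_minus1[of _ nb na])
  finally show ?thesis .
qed

lemma pr_smult1: assumes "S \<in> carrier_mat r c"
  shows "pr (k \<cdot>\<^sub>m S) V = k * pr S V"
  using assms unfolding pr_def by (simp add: sum_distrib_left ac_simps)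

lemma finite_carrier_mat: "finite (carrier_mat n m :: 'a::finite mat set)"
proof -
  have "carrier_mat n m \<subseteq> (\<lambda>f. mat n m f) ` (PiE ({..<n} \<times> {..<m}) (\<lambda>_. (UNIV :: 'a set)))"
  proof
    fix A :: "'a mat" assume A: "A \<in> carrier_mat n m"
    show "A \<in> (\<lambda>f. mat n m f) ` (PiE ({..<n} \<times> {..<m}) (\<lambda>_. (UNIV :: 'a set)))"
      by (rule image_eqI[of _ _ "restrict (\<lambda>ij. A $$ ij) ({..<n}\<times>{..<m})"]) (use A in \<open>auto intro!: eq_matI\<close>)
  qed
  thus ?thesis by (rule finite_subset) (intro finite_imageI finite_PiE; simp)
qed

lemma card_carrier_transpose: "card (carrier_mat n m :: 'a mat set) = card (carrier_mat m n :: 'a mat set)"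
proof (rule bij_betw_same_card[of transpose_mat])
  show "bij_betw transpose_mat (carrier_mat n m :: 'a mat set) (carrier_mat m n)"
    by (rule bij_betw_byWitness[where f' = transpose_mat]) auto
qed

lemma card_carrier_pos: "card (carrier_mat n m :: 'a::finite mat set) > 0"
  using finite_carrier_mat[of n m] zero_carrier_mat[of n m] card_gt_0_iff by blast

lemma kernel_duality:
  fixes ga Xa :: "'a::{finite,field} mat"
  assumes ga: "ga \<in> carrier_mat na na" and Xa: "Xa \<in> carrier_mat na na"
    and gb: "gb \<in> carrier_mat nb nb" and Xb: "Xb \<in> carrier_mat nb nb"
  shows "card {(T,M). T \<in> carrier_mat na nb \<and> M \<in> carrier_mat na nb \<and> ga * T + M * Xb = Xa * M + T * gb}
    = card {S \<in> carrier_mat nb na. S * ga = gb * S \<and> Xb * S = S * Xa} * card (carrier_mat na nb :: 'a mat set)"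
proof -
  let ?Mab = "carrier_mat na nb :: 'a mat set"
  let ?Mba = "carrier_mat nb na :: 'a mat set"
  let ?K1 = "{(T,M). T \<in> carrier_mat na nb \<and> M \<in> carrier_mat na nb \<and> ga * T + M * Xb = Xa * M + T * gb}"
  let ?K2 = "{S \<in> carrier_mat nb na. S * ga = gb * S \<and> Xb * S = S * Xa}"
  define V where "V = (\<lambda>x::'a mat \<times> 'a mat. ga * fst x + snd x * Xb - (Xa * snd x + fst x * gb))"
  define beta where "beta = (\<lambda>S x. pr S (V x))"
  have Vc: "V x \<in> carrier_mat na nb" if "x \<in> ?Mab \<times> ?Mab" for x unfolding V_def using assms that by auto
  have dc: "card ?K1 * card ?Mba = card ?K2 * card (?Mab \<times> ?Mab)"
  proof (rule double_count[where beta = beta])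
    show "finite (?Mab \<times> ?Mab)" "finite ?Mba" by (simp_all add: finite_carrier_mat)
    show "?K1 \<subseteq> ?Mab \<times> ?Mab" "?K2 \<subseteq> ?Mba" by auto
  next
    fix x assume x: "x \<in> ?Mab \<times> ?Mab" "x \<notin> ?K1"
    obtain T M where TM: "x = (T,M)" "T \<in> ?Mab" "M \<in> ?Mab" using x(1) by auto
    have "V x \<noteq> 0\<^sub>m na nb"
    proof
      assume "V x = 0\<^sub>m na nb"
      hence e: "ga * T + M * Xb - (Xa * M + T * gb) = 0\<^sub>m na nb" unfolding V_def TM by simp
      have c1: "ga * T + M * Xb \<in> ?Mab" "Xa * M + T * gb \<in> ?Mab" using TM assms by auto
      have "ga * T + M * Xb = Xa * M + T * gb" by (rule mat_diff_zero[OF c1 e])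
      thus False using x TM by auto
    qed
    then obtain E where E: "E \<in> ?Mba" "pr (V x) E = 1" using pr_nondeg[OF Vc[OF x(1)]] by blast
    have E1: "pr E (V x) = 1" using E pr_swap[OF Vc[OF x(1)] E(1)] by simp
    have "card {S\<in>?Mba. pr S (V x) = 0} * card (UNIV::'a set) = card ?Mba"
    proof (rule fiber_count[where add = "(+)" and w = "\<lambda>c. c \<cdot>\<^sub>m E"])
      show "finite ?Mba" by (rule finite_carrier_mat)
      show "\<And>S T. S \<in> ?Mba \<Longrightarrow> T \<in> ?Mba \<Longrightarrow> S + T \<in> ?Mba" by simp
      show "\<And>S T. S \<in> ?Mba \<Longrightarrow> T \<in> ?Mba \<Longrightarrow> pr (S + T) (V x) = pr S (V x) + pr T (V x)"
        by (rule pr_add1)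
      show "\<And>c. c \<cdot>\<^sub>m E \<in> ?Mba" using E by simp
      show "\<And>c. pr (c \<cdot>\<^sub>m E) (V x) = c" using E E1 by (simp add: pr_smult1)
      show "\<And>S c. S \<in> ?Mba \<Longrightarrow> S + c \<cdot>\<^sub>m E + (- c) \<cdot>\<^sub>m E = S"
        using E(1) smult_cancel_mat by blast
    qed
    thus "card {S\<in>?Mba. beta S x = 0} * card (UNIV::'a set) = card ?Mba" by (simp add: beta_def)
  next
    fix x S assume "x \<in> ?K1" "S \<in> ?Mba"
    then obtain T M where TM: "x = (T,M)" "T \<in> ?Mab" "M \<in> ?Mab" "ga * T + M * Xb = Xa * M + T * gb" by auto
    have c1: "Xa * M + T * gb \<in> ?Mab" using TM assms by auto
    have "V x = 0\<^sub>m na nb" unfolding V_def TM(1) fst_conv snd_conv TM(4) using c1 by simp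
    thus "beta S x = 0" unfolding beta_def using \<open>S \<in> ?Mba\<close> by (simp add: pr_zero2)
  next
    fix S assume S: "S \<in> ?Mba" "S \<notin> ?K2"
    define U1 where "U1 = S * ga - gb * S"
    define U2 where "U2 = Xb * S - S * Xa"
    have U: "U1 \<in> ?Mba" "U2 \<in> ?Mba" unfolding U1_def U2_def using S assms by auto
    have bf: "beta S x = pr U1 (fst x) + pr U2 (snd x)" if "x \<in> ?Mab \<times> ?Mab" for x
      unfolding beta_def V_def U1_def U2_def using pr_key[OF ga Xa gb Xb S(1), of "fst x" "snd x"] that by auto
    have "\<exists>E1\<in>?Mab. \<exists>E2\<in>?Mab. pr U1 E1 + pr U2 E2 = 1"
    proof (cases "U1 = 0\<^sub>m nb na")
      case False
      then obtain E where "E \<in> ?Mab" "pr U1 E = 1" using pr_nondeg[OF U(1)] by blast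
      thus ?thesis using U by (intro bexI[of _ E] bexI[of _ "0\<^sub>m na nb"]) (auto simp: pr_zero2)
    next
      case True
      have "U2 \<noteq> 0\<^sub>m nb na"
      proof
        assume "U2 = 0\<^sub>m nb na"
        hence "S * ga = gb * S" "Xb * S = S * Xa"
          using True S assms unfolding U1_def U2_def by (auto intro: mat_diff_zero[of _ nb na])
        thus False using S by auto
      qed
      then obtain E where "E \<in> ?Mab" "pr U2 E = 1" using pr_nondeg[OF U(2)] by blast
      thus ?thesis using U by (intro bexI[of _ E] bexI[of _ "0\<^sub>m na nb"]) (auto simp: pr_zero2)
    qed
    then obtain E1 E2 where E: "E1 \<in> ?Mab" "E2 \<in> ?Mab" "pr U1 E1 + pr U2 E2 = 1" by blast
    define padd where "padd = (\<lambda>x y::'a mat \<times> 'a mat. (fst x + fst y, snd x + snd y))"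
    define pw where "pw = (\<lambda>c::'a. (c \<cdot>\<^sub>m E1, c \<cdot>\<^sub>m E2))"
    define f where "f = (\<lambda>x::'a mat \<times> 'a mat. pr U1 (fst x) + pr U2 (snd x))"
    have "card {x\<in>?Mab \<times> ?Mab. f x = 0} * card (UNIV::'a set) = card (?Mab \<times> ?Mab)"
    proof (rule fiber_count[where add = padd and w = pw])
      show "finite (?Mab \<times> ?Mab)" by (simp add: finite_carrier_mat)
      show "\<And>x y. x \<in> ?Mab \<times> ?Mab \<Longrightarrow> y \<in> ?Mab \<times> ?Mab \<Longrightarrow> padd x y \<in> ?Mab \<times> ?Mab"
        unfolding padd_def by auto
      show "\<And>x y. x \<in> ?Mab \<times> ?Mab \<Longrightarrow> y \<in> ?Mab \<times> ?Mab \<Longrightarrow> f (padd x y) = f x + f y"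
        unfolding padd_def f_def using U by (auto simp: pr_add2[of _ nb na])
      show "\<And>c. pw c \<in> ?Mab \<times> ?Mab" unfolding pw_def using E by simp
      show "\<And>c. f (pw c) = c"
      proof -
        fix c
        have "pr U1 (c \<cdot>\<^sub>m E1) + pr U2 (c \<cdot>\<^sub>m E2) = c * (pr U1 E1 + pr U2 E2)"
          using U E(1,2) by (simp add: pr_smult2[of _ nb na] distrib_left)
        thus "f (pw c) = c" using E unfolding f_def pw_def by simp
      qed
      show "\<And>x c. x \<in> ?Mab \<times> ?Mab \<Longrightarrow> padd (padd x (pw c)) (pw (- c)) = x"
      proof -
        fix x c assume "x \<in> ?Mab \<times> ?Mab"
        then obtain T M where TM: "x = (T,M)" "T \<in> ?Mab" "M \<in> ?Mab" by auto
        have "T + c \<cdot>\<^sub>m E1 + (- c) \<cdot>\<^sub>m E1 = T" "M + c \<cdot>\<^sub>m E2 + (- c) \<cdot>\<^sub>m E2 = M"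
          using smult_cancel_mat TM E by blast+
        thus "padd (padd x (pw c)) (pw (- c)) = x"
          unfolding padd_def pw_def using TM by simp
      qed
    qed
    hence "card {x\<in>?Mab \<times> ?Mab. pr U1 (fst x) + pr U2 (snd x) = 0} * card (UNIV::'a set) = card (?Mab \<times> ?Mab)"
      unfolding f_def .
    moreover have "{x\<in>?Mab \<times> ?Mab. beta S x = 0} = {x\<in>?Mab \<times> ?Mab. pr U1 (fst x) + pr U2 (snd x) = 0}"
      using bf by auto
    ultimately show "card {x\<in>?Mab \<times> ?Mab. beta S x = 0} * card (UNIV::'a set) = card (?Mab \<times> ?Mab)" by simp
  next
    fix x S assume S: "S \<in> ?K2" and x: "x \<in> ?Mab \<times> ?Mab"
    have S': "S \<in> ?Mba" "S * ga = gb * S" "Xb * S = S * Xa" using S by auto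
    have c2: "gb * S \<in> ?Mba" "S * Xa \<in> ?Mba" using S' assms by auto
    have "S * ga - gb * S = 0\<^sub>m nb na" "Xb * S - S * Xa = 0\<^sub>m nb na"
      unfolding S'(2,3) using c2 by simp_all
    thus "beta S x = 0" unfolding beta_def V_def
      using pr_key[OF ga Xa gb Xb _ , of S "fst x" "snd x"] S x by (auto simp: pr_zero1)
  qed
  have "card ?K1 * card ?Mab = card ?K2 * card ?Mab * card ?Mab"
    using dc unfolding card_carrier_transpose[of nb na] card_cartesian_product by (simp add: mult.assoc)
  thus ?thesis using card_carrier_pos[of na nb, where 'a = 'a] by simp
qed


lemma massoc: "dim_col A = dim_row B \<Longrightarrow> dim_col B = dim_row C \<Longrightarrow> A * B * C = A * (B * (C::'a::semiring_1 mat))"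
  by (rule assoc_mult_mat[of A "dim_row A" "dim_col A" B "dim_col B" C "dim_col C"]) auto
lemma mdistl: "dim_col A = dim_row B \<Longrightarrow> dim_row B = dim_row C \<Longrightarrow> dim_col B = dim_col C \<Longrightarrow> A * (B + C) = A * B + A * (C::'a::semiring_1 mat)"
  by (rule mult_add_distrib_mat[of A "dim_row A" "dim_col A" B "dim_col B"]) auto
lemma mdistr: "dim_col A = dim_row C \<Longrightarrow> dim_row A = dim_row B \<Longrightarrow> dim_col A = dim_col B \<Longrightarrow> (A + B) * C = A * C + B * (C::'a::semiring_1 mat)"
  by (rule add_mult_distrib_mat[of A "dim_row A" "dim_col A" B C "dim_col C"]) auto
lemma madd0r: "dim_row A = r \<Longrightarrow> dim_col A = c \<Longrightarrow> A + 0\<^sub>m r c = (A::'a::monoid_add mat)"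
  by (intro eq_matI) auto
lemma madd0l: "dim_row A = r \<Longrightarrow> dim_col A = c \<Longrightarrow> 0\<^sub>m r c + A = (A::'a::monoid_add mat)"
  by (intro eq_matI) auto

lemma maddassoc: "dim_row A = dim_row B \<Longrightarrow> dim_col A = dim_col B \<Longrightarrow> dim_row B = dim_row C \<Longrightarrow> dim_col B = dim_col C \<Longrightarrow> A + B + C = A + (B + (C::'a::semigroup_add mat))"
  by (intro eq_matI) (auto simp: add.assoc)

lemmas msimps = massoc mdistl mdistr madd0r madd0l maddassoc

locale ses =
  fixes na nb n :: nat and i p s R :: "'a::field mat"
  assumes i: "i \<in> carrier_mat n na" and p: "p \<in> carrier_mat nb n"
    and s: "s \<in> carrier_mat n nb" and R: "R \<in> carrier_mat na n"
    and Ri: "R * i = 1\<^sub>m na" and Rs: "R * s = 0\<^sub>m na nb"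
    and pi: "p * i = 0\<^sub>m nb na" and ps: "p * s = 1\<^sub>m nb"
    and iRsp: "i * R + s * p = 1\<^sub>m n"
begin

lemmas dims[simp] = carrier_matD[OF i] carrier_matD[OF p] carrier_matD[OF s] carrier_matD[OF R]

lemma Ri'[simp]: "dim_row X = na \<Longrightarrow> R * (i * X) = X"
  by (subst massoc[symmetric]) (auto simp: Ri)
lemma Rs'[simp]: "dim_row X = nb \<Longrightarrow> R * (s * X) = 0\<^sub>m na (dim_col X)"
  by (subst massoc[symmetric]) (auto simp: Rs)
lemma pi'[simp]: "dim_row X = na \<Longrightarrow> p * (i * X) = 0\<^sub>m nb (dim_col X)"
  by (subst massoc[symmetric]) (auto simp: pi)
lemma ps'[simp]: "dim_row X = nb \<Longrightarrow> p * (s * X) = X"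
  by (subst massoc[symmetric]) (auto simp: ps)

lemmas rels[simp] = Ri Rs pi ps

definition intw :: "'a mat \<Rightarrow> 'a mat \<Rightarrow> 'a mat \<Rightarrow> bool" where
  "intw A B Z \<longleftrightarrow> Z \<in> carrier_mat n n \<and> Z * i = i * A \<and> p * Z = B * p"

definition Th :: "'a mat \<Rightarrow> 'a mat \<Rightarrow> 'a mat \<Rightarrow> 'a mat" where
  "Th A W B = i * A * R + i * W * p + s * B * p"

lemma Th_carrier: "A \<in> carrier_mat na na \<Longrightarrow> W \<in> carrier_mat na nb \<Longrightarrow> B \<in> carrier_mat nb nb \<Longrightarrow> Th A W B \<in> carrier_mat n n"
  unfolding Th_def using i p s R by (metis add_carrier_mat mult_carrier_mat)

lemma Th_i: "A \<in> carrier_mat na na \<Longrightarrow> W \<in> carrier_mat na nb \<Longrightarrow> B \<in> carrier_mat nb nb \<Longrightarrow> Th A W B * i = i * A"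
  unfolding Th_def by (simp add: msimps)

lemma p_Th: "A \<in> carrier_mat na na \<Longrightarrow> W \<in> carrier_mat na nb \<Longrightarrow> B \<in> carrier_mat nb nb \<Longrightarrow> p * Th A W B = B * p"
  unfolding Th_def by (simp add: msimps)

lemma R_Th: "A \<in> carrier_mat na na \<Longrightarrow> W \<in> carrier_mat na nb \<Longrightarrow> B \<in> carrier_mat nb nb \<Longrightarrow> R * Th A W B = A * R + W * p"
  unfolding Th_def by (simp add: msimps)

lemma Th_s: "A \<in> carrier_mat na na \<Longrightarrow> W \<in> carrier_mat na nb \<Longrightarrow> B \<in> carrier_mat nb nb \<Longrightarrow> Th A W B * s = i * W + s * B"
  unfolding Th_def by (simp add: msimps)

lemma R_Th_s: "A \<in> carrier_mat na na \<Longrightarrow> W \<in> carrier_mat na nb \<Longrightarrow> B \<in> carrier_mat nb nb \<Longrightarrow> R * Th A W B * s = W"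
  by (simp add: R_Th Th_carrier msimps)

lemma intw_Th: "A \<in> carrier_mat na na \<Longrightarrow> W \<in> carrier_mat na nb \<Longrightarrow> B \<in> carrier_mat nb nb \<Longrightarrow> intw A B (Th A W B)"
  unfolding intw_def using Th_carrier Th_i p_Th by blast

lemma intw_rep:
  assumes A: "A \<in> carrier_mat na na" and B: "B \<in> carrier_mat nb nb" and Z: "intw A B Z"
  shows "Z = Th A (R * Z * s) B"
proof -
  have Zc: "Z \<in> carrier_mat n n" and Zi: "Z * i = i * A" and pZ: "p * Z = B * p" using Z unfolding intw_def by auto
  have Zi': "Z * (i * X) = i * (A * X)" if "dim_row X = na" for X
    using Zi Zc A that by (metis massoc carrier_matD dims)
  have pZ': "p * (Z * X) = B * (p * X)" if "dim_row X = n" for X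
    using pZ Zc B that by (metis massoc carrier_matD dims)
  have "Th A (R * Z * s) B = (i * R + s * p) * (Z * (i * R + s * p))"
    using Zc A B by (simp add: Th_def msimps Zi' pZ')
  also have "\<dots> = Z" using Zc by (simp add: iRsp)
  finally show ?thesis by simp
qed

lemma intw_mult:
  assumes "intw A1 B1 Z1" "intw A2 B2 Z2"
    and "A1 \<in> carrier_mat na na" "B1 \<in> carrier_mat nb nb" "A2 \<in> carrier_mat na na" "B2 \<in> carrier_mat nb nb"
  shows "intw (A1 * A2) (B1 * B2) (Z1 * Z2)"
proof -
  have c: "Z1 \<in> carrier_mat n n" "Z2 \<in> carrier_mat n n" and e: "Z1 * i = i * A1" "p * Z1 = B1 * p"
     "Z2 * i = i * A2" "p * Z2 = B2 * p" using assms unfolding intw_def by auto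
  have "Z1 * Z2 * i = Z1 * (Z2 * i)" using c by (simp add: massoc)
  also have "\<dots> = Z1 * (i * A2)" by (simp only: e)
  also have "\<dots> = (Z1 * i) * A2" using c assms by (simp add: massoc)
  also have "\<dots> = (i * A1) * A2" by (simp only: e)
  also have "\<dots> = i * (A1 * A2)" using c assms by (simp add: massoc)
  finally have 1: "Z1 * Z2 * i = i * (A1 * A2)" .
  have "p * (Z1 * Z2) = (p * Z1) * Z2" using c by (simp add: massoc)
  also have "\<dots> = (B1 * p) * Z2" by (simp only: e)
  also have "\<dots> = B1 * (p * Z2)" using c assms by (simp add: massoc)
  also have "\<dots> = B1 * (B2 * p)" by (simp only: e)
  also have "\<dots> = B1 * B2 * p" using c assms by (simp add: massoc)
  finally have 2: "p * (Z1 * Z2) = B1 * B2 * p" .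
  show ?thesis unfolding intw_def using 1 2 c by auto
qed

lemma R_mult_s:
  assumes "intw A1 B1 Z1" "intw A2 B2 Z2"
    and A1: "A1 \<in> carrier_mat na na" and B1: "B1 \<in> carrier_mat nb nb"
    and A2: "A2 \<in> carrier_mat na na" and B2: "B2 \<in> carrier_mat nb nb"
  shows "R * (Z1 * Z2) * s = A1 * (R * Z2 * s) + (R * Z1 * s) * B2"
proof -
  have c: "Z1 \<in> carrier_mat n n" "Z2 \<in> carrier_mat n n" using assms unfolding intw_def by auto
  define W1 where "W1 = R * Z1 * s"
  define W2 where "W2 = R * Z2 * s"
  have W: "W1 \<in> carrier_mat na nb" "W2 \<in> carrier_mat na nb" unfolding W1_def W2_def using c by auto
  have Z1: "Z1 = Th A1 W1 B1" unfolding W1_def by (rule intw_rep[OF A1 B1 assms(1)])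
  have Z2: "Z2 = Th A2 W2 B2" unfolding W2_def by (rule intw_rep[OF A2 B2 assms(2)])
  have "R * (Z1 * Z2) * s = (R * Z1) * (Z2 * s)" using c by (simp add: massoc)
  also have "\<dots> = (A1 * R + W1 * p) * (i * W2 + s * B2)"
    unfolding Z1 Z2 using A1 B1 A2 B2 W by (simp only: R_Th Th_s)
  also have "\<dots> = A1 * W2 + W1 * B2" using A1 B1 A2 B2 W by (simp add: msimps)
  finally show ?thesis unfolding W1_def W2_def .
qed

lemma Th_one: "Th (1\<^sub>m na) (0\<^sub>m na nb) (1\<^sub>m nb) = 1\<^sub>m n"
  unfolding Th_def by (simp add: msimps iRsp)

end

lemma col_as_mult: fixes A :: "'a::semiring_1 mat" assumes A: "A \<in> carrier_mat r c" and j: "j < c"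
  shows "col A j = A *\<^sub>v unit_vec c j"
proof -
  have "col (A * 1\<^sub>m c) j = A *\<^sub>v col (1\<^sub>m c) j" by (rule col_mult2[OF A one_carrier_mat j])
  moreover have "A * 1\<^sub>m c = A" by (rule right_mult_one_mat[OF A])
  ultimately show ?thesis using A j by simp
qed

lemma vec_minus_zero: fixes a :: "'a::ab_group_add vec"
  assumes "a \<in> carrier_vec m" "b \<in> carrier_vec m" "a - b = 0\<^sub>v m" shows "a = b"
proof (rule eq_vecI)
  fix k assume k: "k < dim_vec b"
  have "(a - b) $ k = 0" using assms k by simp
  moreover have "(a - b) $ k = a $ k - b $ k" using k by simp
  ultimately show "a $ k = b $ k" by simp
qed (use assms in auto)

lemma madd_cancel: fixes X :: "'a::ab_group_add mat"
  assumes "X \<in> carrier_mat r c" "Y \<in> carrier_mat r c" "X + Y = Y" shows "X = 0\<^sub>m r c"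
proof (rule eq_matI)
  fix k l assume kl: "k < dim_row (0\<^sub>m r c :: 'a mat)" "l < dim_col (0\<^sub>m r c :: 'a mat)"
  have "(X + Y) $$ (k,l) = Y $$ (k,l)" by (simp only: assms(3))
  moreover have "(X + Y) $$ (k,l) = X $$ (k,l) + Y $$ (k,l)" using kl assms(1,2) by simp
  ultimately have "X $$ (k,l) + Y $$ (k,l) = Y $$ (k,l)" by simp
  thus "X $$ (k,l) = 0\<^sub>m r c $$ (k,l)" using kl by simp
qed (use assms in auto)

lemma inj_cancel: fixes i :: "'a::field mat"
  assumes i: "i \<in> carrier_mat n na"
    and inj: "\<forall>u\<in>carrier_vec na. i *\<^sub>v u = 0\<^sub>v n \<longrightarrow> u = 0\<^sub>v na"
    and X: "X \<in> carrier_mat na m" and Y: "Y \<in> carrier_mat na m" and e: "i * X = i * Y"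
  shows "X = Y"
proof (rule mat_col_eqI)
  fix j assume "j < dim_col Y"
  hence j: "j < m" using Y by simp
  have "i *\<^sub>v col X j = col (i * X) j" by (rule col_mult2[OF i X j, symmetric])
  also have "\<dots> = col (i * Y) j" by (simp only: e)
  also have "\<dots> = i *\<^sub>v col Y j" by (rule col_mult2[OF i Y j])
  finally have "i *\<^sub>v col X j = i *\<^sub>v col Y j" .
  have cX: "col X j \<in> carrier_vec na" and cY: "col Y j \<in> carrier_vec na" using X Y j by auto
  have cv: "col X j - col Y j \<in> carrier_vec na" using cX cY by simp
  have "i *\<^sub>v (col X j - col Y j) = i *\<^sub>v col X j - i *\<^sub>v col Y j"
    by (rule mult_minus_distrib_mat_vec[OF i cX cY])
  also have "\<dots> = 0\<^sub>v n" unfolding \<open>i *\<^sub>v col X j = i *\<^sub>v col Y j\<close>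
    by (intro eq_vecI) (use i cY in simp_all)
  finally have "i *\<^sub>v (col X j - col Y j) = 0\<^sub>v n" .
  hence "col X j - col Y j = 0\<^sub>v na" using inj cv by blast
  thus "col X j = col Y j" by (rule vec_minus_zero[OF cX cY])
qed (use X Y in simp_all)

lemma ses_exists:
  fixes i p :: "'a::field mat"
  assumes i: "i \<in> carrier_mat n na" and p: "p \<in> carrier_mat nb n"
    and inj: "\<forall>u\<in>carrier_vec na. i *\<^sub>v u = 0\<^sub>v n \<longrightarrow> u = 0\<^sub>v na"
    and surj: "\<forall>w\<in>carrier_vec nb. \<exists>v\<in>carrier_vec n. p *\<^sub>v v = w"
    and exact: "\<forall>v\<in>carrier_vec n. p *\<^sub>v v = 0\<^sub>v nb \<longleftrightarrow> (\<exists>u\<in>carrier_vec na. v = i *\<^sub>v u)"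
  shows "\<exists>s R. ses na nb n i p s R"
proof -
  have pi: "p * i = 0\<^sub>m nb na"
  proof (rule mat_col_eqI)
    fix j assume "j < dim_col (0\<^sub>m nb na :: 'a mat)"
    hence j: "j < na" by simp
    have "col (p * i) j = p *\<^sub>v (i *\<^sub>v unit_vec na j)"
      using col_mult2[OF p i j] col_as_mult[OF i j] by simp
    also have "\<dots> = 0\<^sub>v nb"
    proof -
      have v: "i *\<^sub>v unit_vec na j \<in> carrier_vec n" using i by simp
      have "\<exists>u\<in>carrier_vec na. i *\<^sub>v unit_vec na j = i *\<^sub>v u" using unit_vec_carrier by blast
      thus ?thesis using exact v by blast
    qed
    finally show "col (p * i) j = col (0\<^sub>m nb na) j" using j by simp
  qed (use p i in simp_all)
  define vs where "vs = (\<lambda>j. SOME v. v \<in> carrier_vec n \<and> p *\<^sub>v v = unit_vec nb j)"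
  have vs: "vs j \<in> carrier_vec n \<and> p *\<^sub>v vs j = unit_vec nb j" for j
  proof -
    have "\<exists>v. v \<in> carrier_vec n \<and> p *\<^sub>v v = unit_vec nb j" using surj unit_vec_carrier by blast
    thus ?thesis unfolding vs_def by (rule someI_ex)
  qed
  define s where "s = mat n nb (\<lambda>(r,j). vs j $ r)"
  have s: "s \<in> carrier_mat n nb" unfolding s_def by simp
  have cols: "col s j = vs j" if "j < nb" for j
    using vs[of j] that unfolding s_def by (intro eq_vecI) auto
  have ps: "p * s = 1\<^sub>m nb"
  proof (rule mat_col_eqI)
    fix j assume "j < dim_col (1\<^sub>m nb :: 'a mat)"
    hence j: "j < nb" by simp
    show "col (p * s) j = col (1\<^sub>m nb) j" using col_mult2[OF p s j] cols[OF j] vs[of j] j by simp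
  qed (use p s in simp_all)
  have ps': "p *\<^sub>v (s *\<^sub>v w) = w" if "w \<in> carrier_vec nb" for w
    using that p s ps by (simp add: assoc_mult_mat_vec[symmetric, of p nb n s nb w])
  define e where "e = (\<lambda>k. unit_vec n k - s *\<^sub>v (p *\<^sub>v unit_vec n k))"
  have ec: "e k \<in> carrier_vec n" for k unfolding e_def using s p by simp
  have pe: "p *\<^sub>v e k = 0\<^sub>v nb" for k
  proof -
    have "p *\<^sub>v e k = p *\<^sub>v unit_vec n k - p *\<^sub>v (s *\<^sub>v (p *\<^sub>v unit_vec n k))"
      unfolding e_def using p s by (simp add: mult_minus_distrib_mat_vec[of p nb n])
    also have "\<dots> = 0\<^sub>v nb" using ps'[of "p *\<^sub>v unit_vec n k"] p by simp
    finally show ?thesis .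
  qed
  define us where "us = (\<lambda>k. SOME u. u \<in> carrier_vec na \<and> e k = i *\<^sub>v u)"
  have us: "us k \<in> carrier_vec na \<and> e k = i *\<^sub>v us k" for k
  proof -
    have "\<exists>u\<in>carrier_vec na. e k = i *\<^sub>v u" using exact ec[of k] pe[of k] by blast
    hence "\<exists>u. u \<in> carrier_vec na \<and> e k = i *\<^sub>v u" by blast
    thus ?thesis unfolding us_def by (rule someI_ex)
  qed
  define R where "R = mat na n (\<lambda>(r,k). us k $ r)"
  have R: "R \<in> carrier_mat na n" unfolding R_def by simp
  have colR: "col R k = us k" if "k < n" for k
    using us[of k] that unfolding R_def by (intro eq_vecI) auto
  have iRsp: "i * R + s * p = 1\<^sub>m n"
  proof (rule mat_col_eqI)
    fix k assume "k < dim_col (1\<^sub>m n :: 'a mat)"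
    hence k: "k < n" by simp
    have "col (i * R + s * p) k = col (i * R) k + col (s * p) k"
      using i R s p k by (intro col_add[of _ n n]) auto
    also have "\<dots> = i *\<^sub>v us k + s *\<^sub>v (p *\<^sub>v unit_vec n k)"
      unfolding col_mult2[OF i R k] col_mult2[OF s p k] colR[OF k] col_as_mult[OF p k] ..
    also have "\<dots> = e k + s *\<^sub>v (p *\<^sub>v unit_vec n k)" using us[of k] by simp
    also have "\<dots> = unit_vec n k" unfolding e_def using s p by (intro eq_vecI) auto
    finally show "col (i * R + s * p) k = col (1\<^sub>m n) k" using k by simp
  qed (use i R s p in simp_all)
  have Ri: "R * i = 1\<^sub>m na"
  proof (rule inj_cancel[OF i inj])
    show "R * i \<in> carrier_mat na na" "1\<^sub>m na \<in> carrier_mat na na" using R i by auto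
    have "i * (R * i) = (i * R + s * p) * i"
      using i R s p by (simp add: msimps pi)
    also have "\<dots> = i" using iRsp i by simp
    finally show "i * (R * i) = i * 1\<^sub>m na" using i by simp
  qed
  have Rs: "R * s = 0\<^sub>m na nb"
  proof (rule inj_cancel[OF i inj])
    show "R * s \<in> carrier_mat na nb" "0\<^sub>m na nb \<in> carrier_mat na nb" using R s by auto
    have "i * (R * s) + s = (i * R + s * p) * s"
      using i R s p by (simp add: msimps ps)
    also have "\<dots> = s" using iRsp s by simp
    finally have "i * (R * s) = 0\<^sub>m n nb" using i R s by (intro madd_cancel[of _ n nb s]) auto
    thus "i * (R * s) = i * 0\<^sub>m na nb" using i by simp
  qed
  have "ses na nb n i p s R"
    by unfold_locales (fact i p s R Ri Rs pi ps iRsp)+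
  thus ?thesis by blast
qed

lemma matinv_eq: fixes A :: "'a::semiring_1 mat"
  assumes A: "A \<in> carrier_mat n n" and B: "B \<in> carrier_mat n n" and AB: "A * B = 1\<^sub>m n" and BA: "B * A = 1\<^sub>m n"
  shows "matinv A = B"
  unfolding matinv_def
proof (rule the_equality)
  show "B \<in> carrier_mat (dim_row A) (dim_row A) \<and> A * B = 1\<^sub>m (dim_row A) \<and> B * A = 1\<^sub>m (dim_row A)"
    using A B AB BA by simp
next
  fix B' assume "B' \<in> carrier_mat (dim_row A) (dim_row A) \<and> A * B' = 1\<^sub>m (dim_row A) \<and> B' * A = 1\<^sub>m (dim_row A)"
  hence B': "B' \<in> carrier_mat n n" "A * B' = 1\<^sub>m n" "B' * A = 1\<^sub>m n" using A by auto
  have "B' = B' * 1\<^sub>m n" using B' by simp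
  also have "\<dots> = B' * (A * B)" using AB by simp
  also have "\<dots> = (B' * A) * B" using A B B'(1) by (simp add: massoc)
  also have "\<dots> = 1\<^sub>m n * B" by (simp only: B'(3))
  also have "\<dots> = B" using B by simp
  finally show "B' = B" .
qed

lemma conj_comm: fixes A :: "'a::semiring_1 mat"
  assumes A: "A \<in> carrier_mat n n" and B: "B \<in> carrier_mat n n" and X: "X \<in> carrier_mat n n"
    and AB: "A * B = 1\<^sub>m n" and BA: "B * A = 1\<^sub>m n"
  shows "A * X * B = X \<longleftrightarrow> A * X = X * A"
proof
  assume h: "A * X * B = X"
  have "A * X = A * X * (B * A)" using BA A X by simp
  also have "\<dots> = (A * X * B) * A" using A B X by (simp add: massoc)
  finally show "A * X = X * A" using h by simp
next
  assume h: "A * X = X * A"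
  have "A * X * B = X * (A * B)" using h A B X by (simp add: massoc)
  thus "A * X * B = X" using AB X by simp
qed

lemma conj_comm2: fixes gb :: "'a::semiring_1 mat"
  assumes gb: "gb \<in> carrier_mat nb nb" and ga: "ga \<in> carrier_mat na na" and gai: "gai \<in> carrier_mat na na"
    and R: "R \<in> carrier_mat nb na" and i1: "ga * gai = 1\<^sub>m na" and i2: "gai * ga = 1\<^sub>m na"
  shows "gb * R * gai = R \<longleftrightarrow> gb * R = R * ga"
proof
  assume h: "gb * R * gai = R"
  have "gb * R = gb * R * (gai * ga)" using i2 gb R by simp
  also have "\<dots> = (gb * R * gai) * ga" using gb R gai ga by (simp add: massoc)
  finally show "gb * R = R * ga" using h by simp
next
  assume h: "gb * R = R * ga"
  have "gb * R * gai = R * (ga * gai)" using h gb R gai ga by (simp add: massoc)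
  thus "gb * R * gai = R" using i1 R by simp
qed

lemma End_carrier: "g \<in> End_Q Q \<Longrightarrow> c \<in> verts Q \<Longrightarrow> g c \<in> carrier_mat (dim Q c) (dim Q c)"
  unfolding End_Q_def by auto

lemma End_ext: "g \<in> End_Q Q \<Longrightarrow> c \<notin> verts Q \<Longrightarrow> g c = undefined"
  unfolding End_Q_def extensional_def by auto

lemma Aut_inv:
  assumes g: "g \<in> Aut_Q Q"
  shows "tuple_inv Q g \<in> End_Q Q" "\<And>c. c \<in> verts Q \<Longrightarrow> g c * tuple_inv Q g c = 1\<^sub>m (dim Q c)"
    "\<And>c. c \<in> verts Q \<Longrightarrow> tuple_inv Q g c * g c = 1\<^sub>m (dim Q c)"
    "\<And>c. c \<in> verts Q \<Longrightarrow> matinv (g c) = tuple_inv Q g c"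
proof -
  obtain Y where Y: "Y \<in> End_Q Q" "\<forall>c\<in>verts Q. g c * Y c = 1\<^sub>m (dim Q c) \<and> Y c * g c = 1\<^sub>m (dim Q c)"
    and gE: "g \<in> End_Q Q" using g unfolding Aut_Q_def by blast
  have mi: "matinv (g c) = Y c" if c: "c \<in> verts Q" for c
  proof (rule matinv_eq[of _ "dim Q c"])
    show "g c \<in> carrier_mat (dim Q c) (dim Q c)" by (rule End_carrier[OF gE c])
    show "Y c \<in> carrier_mat (dim Q c) (dim Q c)" by (rule End_carrier[OF Y(1) c])
    show "g c * Y c = 1\<^sub>m (dim Q c)" "Y c * g c = 1\<^sub>m (dim Q c)" using Y(2) c by blast+
  qed
  have eq: "tuple_inv Q g = Y"
  proof
    fix c show "tuple_inv Q g c = Y c"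
    proof (cases "c \<in> verts Q")
      case True thus ?thesis using mi[OF True] unfolding tuple_inv_def by simp
    next
      case False thus ?thesis using End_ext[OF Y(1) False] unfolding tuple_inv_def by simp
    qed
  qed
  show "tuple_inv Q g \<in> End_Q Q" unfolding eq by (rule Y(1))
  show "\<And>c. c \<in> verts Q \<Longrightarrow> g c * tuple_inv Q g c = 1\<^sub>m (dim Q c)" unfolding eq using Y(2) by blast
  show "\<And>c. c \<in> verts Q \<Longrightarrow> tuple_inv Q g c * g c = 1\<^sub>m (dim Q c)" unfolding eq using Y(2) by blast
  show "\<And>c. c \<in> verts Q \<Longrightarrow> matinv (g c) = tuple_inv Q g c" unfolding eq by (rule mi)
qed


lemma End_arr: "g \<in> End_Q Q \<Longrightarrow> e \<in> arrs Q \<Longrightarrow> amap Q e * g (src Q e) = g (tgt Q e) * amap Q e"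
  unfolding End_Q_def by auto

lemma Aut_End: "g \<in> Aut_Q Q \<Longrightarrow> g \<in> End_Q Q" unfolding Aut_Q_def by auto

lemma End_mult:
  assumes Q: "is_quiver_rep Q" and g: "g \<in> End_Q Q" and h: "h \<in> End_Q Q"
  shows "tuple_mult Q g h \<in> End_Q Q"
  unfolding End_Q_def
proof (intro CollectI conjI ballI)
  show "tuple_mult Q g h \<in> extensional (verts Q)" unfolding tuple_mult_def by simp
  fix c assume c: "c \<in> verts Q"
  thus "tuple_mult Q g h c \<in> carrier_mat (dim Q c) (dim Q c)"
    using mult_carrier_mat[OF End_carrier[OF g c] End_carrier[OF h c]] unfolding tuple_mult_def by simp
next
  fix e assume e: "e \<in> arrs Q"
  have st: "src Q e \<in> verts Q" "tgt Q e \<in> verts Q" and am: "amap Q e \<in> carrier_mat (dim Q (tgt Q e)) (dim Q (src Q e))"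
    using Q e unfolding is_quiver_rep_def by auto
  have c: "g (src Q e) \<in> carrier_mat (dim Q (src Q e)) (dim Q (src Q e))" "h (src Q e) \<in> carrier_mat (dim Q (src Q e)) (dim Q (src Q e))"
     "g (tgt Q e) \<in> carrier_mat (dim Q (tgt Q e)) (dim Q (tgt Q e))" "h (tgt Q e) \<in> carrier_mat (dim Q (tgt Q e)) (dim Q (tgt Q e))"
    using End_carrier[OF g] End_carrier[OF h] st by auto
  have "amap Q e * (g (src Q e) * h (src Q e)) = (amap Q e * g (src Q e)) * h (src Q e)"
    using c am by (simp add: massoc)
  also have "\<dots> = g (tgt Q e) * (amap Q e * h (src Q e))"
    unfolding End_arr[OF g e] using c am by (simp add: massoc)
  also have "\<dots> = (g (tgt Q e) * h (tgt Q e)) * amap Q e"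
    unfolding End_arr[OF h e] using c am by (simp add: massoc)
  finally show "amap Q e * tuple_mult Q g h (src Q e) = tuple_mult Q g h (tgt Q e) * amap Q e"
    unfolding tuple_mult_def using st by simp
qed

lemma one_End: assumes Q: "is_quiver_rep Q" shows "tuple_one Q \<in> End_Q Q"
  unfolding End_Q_def tuple_one_def
proof (intro CollectI conjI ballI)
  fix e assume e: "e \<in> arrs Q"
  have st: "src Q e \<in> verts Q" "tgt Q e \<in> verts Q" and am: "amap Q e \<in> carrier_mat (dim Q (tgt Q e)) (dim Q (src Q e))"
    using Q e unfolding is_quiver_rep_def by auto
  show "amap Q e * (\<lambda>c\<in>verts Q. 1\<^sub>m (dim Q c)) (src Q e) = (\<lambda>c\<in>verts Q. 1\<^sub>m (dim Q c)) (tgt Q e) * amap Q e"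
    using st am by simp
qed auto

lemma one_Aut: assumes Q: "is_quiver_rep Q" shows "tuple_one Q \<in> Aut_Q Q"
  unfolding Aut_Q_def using one_End[OF Q] by (auto simp: tuple_one_def intro!: bexI[of _ "tuple_one Q"])

lemma Aut_mult:
  assumes Q: "is_quiver_rep Q" and g: "g \<in> Aut_Q Q" and h: "h \<in> Aut_Q Q"
  shows "tuple_mult Q g h \<in> Aut_Q Q"
proof -
  let ?gi = "tuple_inv Q g" and ?hi = "tuple_inv Q h"
  have E: "tuple_mult Q g h \<in> End_Q Q" "tuple_mult Q ?hi ?gi \<in> End_Q Q"
    using End_mult[OF Q] Aut_End[OF g] Aut_End[OF h] Aut_inv(1)[OF g] Aut_inv(1)[OF h] by auto
  have "tuple_mult Q g h c * tuple_mult Q ?hi ?gi c = 1\<^sub>m (dim Q c) \<and> tuple_mult Q ?hi ?gi c * tuple_mult Q g h c = 1\<^sub>m (dim Q c)"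
    if c: "c \<in> verts Q" for c
  proof -
    have cs: "g c \<in> carrier_mat (dim Q c) (dim Q c)" "h c \<in> carrier_mat (dim Q c) (dim Q c)"
      "?gi c \<in> carrier_mat (dim Q c) (dim Q c)" "?hi c \<in> carrier_mat (dim Q c) (dim Q c)"
      using End_carrier[OF Aut_End[OF g] c] End_carrier[OF Aut_End[OF h] c]
        End_carrier[OF Aut_inv(1)[OF g] c] End_carrier[OF Aut_inv(1)[OF h] c] by auto
    have "g c * h c * (?hi c * ?gi c) = g c * (h c * ?hi c) * ?gi c" using cs by (simp add: massoc)
    also have "\<dots> = 1\<^sub>m (dim Q c)" using Aut_inv(2)[OF g c] Aut_inv(2)[OF h c] cs by simp
    finally have 1: "g c * h c * (?hi c * ?gi c) = 1\<^sub>m (dim Q c)" .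
    have "?hi c * ?gi c * (g c * h c) = ?hi c * (?gi c * g c) * h c" using cs by (simp add: massoc)
    also have "\<dots> = 1\<^sub>m (dim Q c)" using Aut_inv(3)[OF g c] Aut_inv(3)[OF h c] cs by simp
    finally have 2: "?hi c * ?gi c * (g c * h c) = 1\<^sub>m (dim Q c)" .
    show ?thesis using 1 2 c unfolding tuple_mult_def by simp
  qed
  thus ?thesis unfolding Aut_Q_def using E by blast
qed

lemma Aut_inv_Aut: assumes g: "g \<in> Aut_Q Q" shows "tuple_inv Q g \<in> Aut_Q Q"
  unfolding Aut_Q_def using Aut_inv[OF g] Aut_End[OF g] by blast

lemma tuple_assoc: "tuple_mult Q (tuple_mult Q g h) k = tuple_mult Q g (tuple_mult Q h k)"
  if "g \<in> End_Q Q" "h \<in> End_Q Q" "k \<in> End_Q Q"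
proof
  fix c show "tuple_mult Q (tuple_mult Q g h) k c = tuple_mult Q g (tuple_mult Q h k) c"
  proof (cases "c \<in> verts Q")
    case True
    show ?thesis using End_carrier[OF that(1) True] End_carrier[OF that(2) True] End_carrier[OF that(3) True] True
      unfolding tuple_mult_def by (simp add: massoc)
  qed (simp add: tuple_mult_def)
qed

lemma tuple_lone: "g \<in> End_Q Q \<Longrightarrow> tuple_mult Q (tuple_one Q) g = g"
proof
  fix c assume g: "g \<in> End_Q Q"
  show "tuple_mult Q (tuple_one Q) g c = g c"
  proof (cases "c \<in> verts Q")
    case True thus ?thesis using End_carrier[OF g True] unfolding tuple_mult_def tuple_one_def by simp
  next
    case False thus ?thesis using g unfolding tuple_mult_def End_Q_def by (simp add: extensional_def)
  qed
qed

lemma tuple_linv: "g \<in> Aut_Q Q \<Longrightarrow> tuple_mult Q (tuple_inv Q g) g = tuple_one Q"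
proof
  fix c assume g: "g \<in> Aut_Q Q"
  show "tuple_mult Q (tuple_inv Q g) g c = tuple_one Q c"
    using Aut_inv(3)[OF g, of c] unfolding tuple_mult_def tuple_one_def by simp
qed

lemma conj_End:
  assumes Q: "is_quiver_rep Q" and g: "g \<in> Aut_Q Q" and Y: "Y \<in> End_Q Q"
  shows "conj_act Q g Y \<in> End_Q Q"
proof -
  have ce: "conj_act Q g Y = tuple_mult Q (tuple_mult Q g Y) (tuple_inv Q g)"
  proof
    fix c show "conj_act Q g Y c = tuple_mult Q (tuple_mult Q g Y) (tuple_inv Q g) c"
      unfolding conj_act_def tuple_mult_def using Aut_inv(4)[OF g, of c] by simp
  qed
  show ?thesis unfolding ce
    by (intro End_mult[OF Q] Aut_End[OF g] Y Aut_inv(1)[OF g])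
qed

lemma conj_one:
  fixes Y :: "'v \<Rightarrow> 'a::semiring_1 mat"
  assumes Y: "Y \<in> End_Q Q" shows "conj_act Q (tuple_one Q) Y = Y"
proof
  fix c show "conj_act Q (tuple_one Q) Y c = Y c"
  proof (cases "c \<in> verts Q")
    case True
    have m: "matinv (1\<^sub>m (dim Q c)) = (1\<^sub>m (dim Q c) :: 'a mat)" by (rule matinv_eq) auto
    show ?thesis using True End_carrier[OF Y True] unfolding conj_act_def tuple_one_def by (simp add: m)
  next
    case False thus ?thesis using Y unfolding conj_act_def End_Q_def by (simp add: extensional_def)
  qed
qed

lemma conj_mult:
  assumes g: "g \<in> Aut_Q Q" and h: "h \<in> Aut_Q Q" and Y: "Y \<in> End_Q Q"
  shows "conj_act Q (tuple_mult Q g h) Y = conj_act Q g (conj_act Q h Y)"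
proof
  fix c show "conj_act Q (tuple_mult Q g h) Y c = conj_act Q g (conj_act Q h Y) c"
  proof (cases "c \<in> verts Q")
    case True
    let ?n = "dim Q c"
    have cs: "g c \<in> carrier_mat ?n ?n" "h c \<in> carrier_mat ?n ?n" "Y c \<in> carrier_mat ?n ?n"
      "matinv (g c) \<in> carrier_mat ?n ?n" "matinv (h c) \<in> carrier_mat ?n ?n"
      using End_carrier[OF Aut_End[OF g] True] End_carrier[OF Aut_End[OF h] True] End_carrier[OF Y True]
        End_carrier[OF Aut_inv(1)[OF g] True] End_carrier[OF Aut_inv(1)[OF h] True]
      unfolding Aut_inv(4)[OF g True] Aut_inv(4)[OF h True]
      by blast+
    have "matinv (g c * h c) = matinv (h c) * matinv (g c)"
    proof (rule matinv_eq[of _ ?n])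
      have gi: "g c * matinv (g c) = 1\<^sub>m ?n" "matinv (g c) * g c = 1\<^sub>m ?n"
        unfolding Aut_inv(4)[OF g True] using Aut_inv(2,3)[OF g True] by blast+
      have hi: "h c * matinv (h c) = 1\<^sub>m ?n" "matinv (h c) * h c = 1\<^sub>m ?n"
        unfolding Aut_inv(4)[OF h True] using Aut_inv(2,3)[OF h True] by blast+
      have "g c * h c * (matinv (h c) * matinv (g c)) = g c * (h c * matinv (h c)) * matinv (g c)"
        using cs by (simp add: massoc)
      thus "g c * h c * (matinv (h c) * matinv (g c)) = 1\<^sub>m ?n" using gi hi cs by simp
      have "matinv (h c) * matinv (g c) * (g c * h c) = matinv (h c) * (matinv (g c) * g c) * h c"
        using cs by (simp add: massoc)
      thus "matinv (h c) * matinv (g c) * (g c * h c) = 1\<^sub>m ?n" using gi hi cs by simp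
    qed (use cs in simp_all)
    thus ?thesis using True cs unfolding conj_act_def tuple_mult_def by (simp add: massoc)
  next
    case False thus ?thesis unfolding conj_act_def by simp
  qed
qed

lemma finite_End: assumes "finite (verts Q)" shows "finite (End_Q Q :: ('v \<Rightarrow> 'a::{finite,semiring_1} mat) set)"
proof (rule finite_subset)
  show "End_Q Q \<subseteq> PiE (verts Q) (\<lambda>c. carrier_mat (dim Q c) (dim Q c))"
    unfolding End_Q_def by (auto simp: PiE_def Pi_def)
  show "finite (PiE (verts Q) (\<lambda>c. carrier_mat (dim Q c) (dim Q c) :: 'a mat set))"
    using assms by (intro finite_PiE) (simp_all add: finite_carrier_mat)
qed


lemma matinv_mult:
  assumes g: "g \<in> Aut_Q Q" and h: "h \<in> Aut_Q Q" and v: "v \<in> verts Q"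
  shows "matinv (g v * h v) = matinv (h v) * matinv (g v)"
proof -
  let ?n = "dim Q v"
  have cs: "g v \<in> carrier_mat ?n ?n" "h v \<in> carrier_mat ?n ?n"
    "matinv (g v) \<in> carrier_mat ?n ?n" "matinv (h v) \<in> carrier_mat ?n ?n"
    using End_carrier[OF Aut_End[OF g] v] End_carrier[OF Aut_End[OF h] v]
      End_carrier[OF Aut_inv(1)[OF g] v] End_carrier[OF Aut_inv(1)[OF h] v]
    unfolding Aut_inv(4)[OF g v] Aut_inv(4)[OF h v] by blast+
  have gi: "g v * matinv (g v) = 1\<^sub>m ?n" "matinv (g v) * g v = 1\<^sub>m ?n"
    unfolding Aut_inv(4)[OF g v] using Aut_inv(2,3)[OF g v] by blast+
  have hi: "h v * matinv (h v) = 1\<^sub>m ?n" "matinv (h v) * h v = 1\<^sub>m ?n"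
    unfolding Aut_inv(4)[OF h v] using Aut_inv(2,3)[OF h v] by blast+
  show ?thesis
  proof (rule matinv_eq[of _ ?n])
    have "g v * h v * (matinv (h v) * matinv (g v)) = g v * (h v * matinv (h v)) * matinv (g v)"
      using cs by (simp add: massoc)
    thus "g v * h v * (matinv (h v) * matinv (g v)) = 1\<^sub>m ?n" using gi hi cs by simp
    have "matinv (h v) * matinv (g v) * (g v * h v) = matinv (h v) * (matinv (g v) * g v) * h v"
      using cs by (simp add: massoc)
    thus "matinv (h v) * matinv (g v) * (g v * h v) = 1\<^sub>m ?n" using gi hi cs by simp
  qed (use cs in simp_all)
qed

locale omega_ctx = ses "dim Q a" "dim Q b" "dim Q' c" "amap Q' e1" "amap Q' e2" s R
  for Q Q' :: "('v, 'e, 'a::{finite,field}) quiver_rep" and a b c :: 'v and e1 e2 :: 'e and s R +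
  fixes X :: "'v \<Rightarrow> 'a mat" and H :: "('v \<Rightarrow> 'a mat) set"
  assumes Q: "is_quiver_rep Q" and Q': "is_quiver_rep Q'"
    and a: "a \<in> verts Q" and b: "b \<in> verts Q"
    and X: "X \<in> End_Q Q" and sub: "is_subgroup_Aut H Q" and Hfix: "\<forall>g\<in>H. conj_act Q g X = X"
    and cnot: "c \<notin> verts Q" and e1n: "e1 \<notin> arrs Q" and e2n: "e2 \<notin> arrs Q" and e12: "e1 \<noteq> e2"
    and vQ': "verts Q' = insert c (verts Q)" and aQ': "arrs Q' = arrs Q \<union> {e1, e2}"
    and arrdata: "\<forall>e\<in>arrs Q. src Q' e = src Q e \<and> tgt Q' e = tgt Q e \<and> amap Q' e = amap Q e"
    and dimQ': "\<forall>v\<in>verts Q. dim Q' v = dim Q v"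
    and se1: "src Q' e1 = a" and te1: "tgt Q' e1 = c" and se2: "src Q' e2 = c" and te2: "tgt Q' e2 = b"
begin

abbreviation "na \<equiv> dim Q a"
abbreviation "nb \<equiv> dim Q b"
abbreviation "n \<equiv> dim Q' c"
abbreviation "ii \<equiv> amap Q' e1"
abbreviation "pp \<equiv> amap Q' e2"

definition ext :: "('v \<Rightarrow> 'a mat) \<Rightarrow> 'a mat \<Rightarrow> 'v \<Rightarrow> 'a mat" where
  "ext Z0 Z = (\<lambda>v\<in>verts Q'. if v = c then Z else Z0 v)"

lemma ac: "a \<noteq> c" "b \<noteq> c" using a b cnot by auto

lemma ext_a: "ext Z0 Z a = Z0 a" and ext_b: "ext Z0 Z b = Z0 b" and ext_c: "ext Z0 Z c = Z"
  unfolding ext_def using a b ac vQ' by auto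

lemma ext_v: "v \<in> verts Q \<Longrightarrow> ext Z0 Z v = Z0 v"
  unfolding ext_def using cnot vQ' by auto

lemma restr_ext: "Z0 \<in> extensional (verts Q) \<Longrightarrow> restr_to Q (ext Z0 Z) = Z0"
  unfolding restr_to_def by (rule ext) (auto simp: ext_v extensional_def)

lemma ext_restr: "Y \<in> End_Q Q' \<Longrightarrow> ext (restr_to Q Y) (Y c) = Y"
proof
  fix v assume Y: "Y \<in> End_Q Q'"
  show "ext (restr_to Q Y) (Y c) v = Y v"
    using End_ext[OF Y, of v] vQ' unfolding ext_def restr_to_def by (cases "v \<in> verts Q'") auto
qed

lemma End_c: assumes Y: "Y \<in> End_Q Q'" shows "intw (Y a) (Y b) (Y c)"
proof -
  have c: "c \<in> verts Q'" using vQ' by simp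
  have "e1 \<in> arrs Q'" "e2 \<in> arrs Q'" using aQ' by auto
  from End_arr[OF Y this(1)] End_arr[OF Y this(2)]
  have "ii * Y a = Y c * ii" "pp * Y c = Y b * pp" using se1 te1 se2 te2 by simp_all
  thus ?thesis unfolding intw_def using End_carrier[OF Y c] by simp
qed

lemma ext_End:
  assumes Z0: "Z0 \<in> End_Q Q" and iw: "intw (Z0 a) (Z0 b) Z"
  shows "ext Z0 Z \<in> End_Q Q'"
  unfolding End_Q_def
proof (intro CollectI conjI ballI)
  show "ext Z0 Z \<in> extensional (verts Q')" unfolding ext_def by simp
next
  fix v assume v: "v \<in> verts Q'"
  show "ext Z0 Z v \<in> carrier_mat (dim Q' v) (dim Q' v)"
  proof (cases "v = c")
    case True thus ?thesis using iw unfolding intw_def by (simp add: ext_c)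
  next
    case False hence "v \<in> verts Q" using v vQ' by simp
    thus ?thesis using End_carrier[OF Z0] dimQ' by (simp add: ext_v)
  qed
next
  fix e assume e: "e \<in> arrs Q'"
  show "amap Q' e * ext Z0 Z (src Q' e) = ext Z0 Z (tgt Q' e) * amap Q' e"
  proof (cases "e \<in> arrs Q")
    case True
    have st: "src Q e \<in> verts Q" "tgt Q e \<in> verts Q" using Q True unfolding is_quiver_rep_def by auto
    show ?thesis using arrdata True st End_arr[OF Z0 True] by (simp add: ext_v)
  next
    case False
    hence "e = e1 \<or> e = e2" using e aQ' by auto
    moreover have "Z * ii = ii * Z0 a" "pp * Z = Z0 b * pp" using iw unfolding intw_def by auto
    ultimately show ?thesis unfolding se1 te1 se2 te2 ext_a ext_b ext_c
      by (metis se1 te1 se2 te2 ext_a ext_b ext_c)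
  qed
qed


lemma HAut: "g \<in> H \<Longrightarrow> g \<in> Aut_Q Q" using sub unfolding is_subgroup_Aut_def by auto
lemma HEnd: "g \<in> H \<Longrightarrow> g \<in> End_Q Q" using HAut Aut_End by blast

lemma gcar: "g \<in> H \<Longrightarrow> g a \<in> carrier_mat na na" "g \<in> H \<Longrightarrow> g b \<in> carrier_mat nb nb"
  using End_carrier[OF HEnd a] End_carrier[OF HEnd b] by auto
lemma Xcar: "X a \<in> carrier_mat na na" "X b \<in> carrier_mat nb nb"
  using End_carrier[OF X a] End_carrier[OF X b] by auto

lemma Hcomm: assumes g: "g \<in> H" and v: "v \<in> verts Q" shows "g v * X v = X v * g v"
proof -
  have "conj_act Q g X v = X v" using Hfix g by simp
  hence "g v * X v * matinv (g v) = X v" unfolding conj_act_def using v by simp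
  thus ?thesis
    using conj_comm[OF End_carrier[OF HEnd[OF g] v] End_carrier[OF Aut_inv(1)[OF HAut[OF g]] v] End_carrier[OF X v]
        Aut_inv(2)[OF HAut[OF g] v] Aut_inv(3)[OF HAut[OF g] v]]
    unfolding Aut_inv(4)[OF HAut[OF g] v] by blast
qed

lemma Hconj: assumes g: "g \<in> H" and v: "v \<in> verts Q" shows "g v * X v * matinv (g v) = X v"
proof -
  have "conj_act Q g X v = X v" using Hfix g by simp
  thus "g v * X v * matinv (g v) = X v" unfolding conj_act_def using v by simp
qed

lemma intw_one: assumes "intw (1\<^sub>m na) (1\<^sub>m nb) Z" "R * Z * s = 0\<^sub>m na nb" shows "Z = 1\<^sub>m n"
  using intw_rep[OF one_carrier_mat one_carrier_mat assms(1)] assms(2) Th_one by simp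

lemma lift_props: assumes "g' \<in> Aut_Q Q'" "restr_to Q g' = g"
  shows "g' = ext g (g' c)" "intw (g a) (g b) (g' c)"
proof -
  have E: "g' \<in> End_Q Q'" using assms Aut_End by blast
  show "g' = ext g (g' c)" using ext_restr[OF E] assms(2) by simp
  have "restr_to Q g' a = g' a" "restr_to Q g' b = g' b" using a b unfolding restr_to_def by auto
  thus "intw (g a) (g b) (g' c)" using End_c[OF E] assms(2) by simp
qed

lemma lift_exists:
  assumes g: "g \<in> H" and M: "M \<in> carrier_mat na nb"
  shows "ext g (Th (g a) M (g b)) \<in> Aut_Q Q'"
proof -
  let ?gi = "tuple_inv Q g"
  have gA: "g \<in> Aut_Q Q" by (rule HAut[OF g])
  have giE: "?gi \<in> End_Q Q" by (rule Aut_inv(1)[OF gA])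
  have ga: "g a \<in> carrier_mat na na" and gb: "g b \<in> carrier_mat nb nb" using gcar g by auto
  have gia: "?gi a \<in> carrier_mat na na" and gib: "?gi b \<in> carrier_mat nb nb"
    using End_carrier[OF giE a] End_carrier[OF giE b] by auto
  have inv: "g a * ?gi a = 1\<^sub>m na" "?gi a * g a = 1\<^sub>m na" "g b * ?gi b = 1\<^sub>m nb" "?gi b * g b = 1\<^sub>m nb"
    using Aut_inv(2,3)[OF gA a] Aut_inv(2,3)[OF gA b] by auto
  define M' where "M' = - (?gi a * M * ?gi b)"
  have M': "M' \<in> carrier_mat na nb" unfolding M'_def using gia gib M by auto
  define Z where "Z = Th (g a) M (g b)"
  define Z' where "Z' = Th (?gi a) M' (?gi b)"
  have iZ: "intw (g a) (g b) Z" unfolding Z_def by (rule intw_Th[OF ga M gb])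
  have iZ': "intw (?gi a) (?gi b) Z'" unfolding Z'_def by (rule intw_Th[OF gia M' gib])
  have WZ: "R * Z * s = M" unfolding Z_def by (rule R_Th_s[OF ga M gb])
  have WZ': "R * Z' * s = M'" unfolding Z'_def by (rule R_Th_s[OF gia M' gib])
  have Zc: "Z \<in> carrier_mat n n" "Z' \<in> carrier_mat n n" using iZ iZ' unfolding intw_def by auto
  have ZZ': "Z * Z' = 1\<^sub>m n"
  proof (rule intw_one)
    show "intw (1\<^sub>m na) (1\<^sub>m nb) (Z * Z')" using intw_mult[OF iZ iZ' ga gb gia gib] inv by simp
    have "R * (Z * Z') * s = g a * M' + M * ?gi b" using R_mult_s[OF iZ iZ' ga gb gia gib] WZ WZ' by simp
    also have "g a * M' = - (M * ?gi b)"
    proof -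
      have "g a * M' = - (g a * (?gi a * M * ?gi b))" unfolding M'_def using ga gia gib M by simp
      also have "g a * (?gi a * M * ?gi b) = (g a * ?gi a) * (M * ?gi b)" using ga gia gib M by (simp add: massoc)
      also have "\<dots> = M * ?gi b" using inv M gib by simp
      finally show ?thesis .
    qed
    also have "- (M * ?gi b) + M * ?gi b = 0\<^sub>m na nb" using M gib by (intro uminus_l_inv_mat) auto
    finally show "R * (Z * Z') * s = 0\<^sub>m na nb" .
  qed
  have Z'Z: "Z' * Z = 1\<^sub>m n"
  proof (rule intw_one)
    show "intw (1\<^sub>m na) (1\<^sub>m nb) (Z' * Z)" using intw_mult[OF iZ' iZ gia gib ga gb] inv by simp
    have "R * (Z' * Z) * s = ?gi a * M + M' * g b" using R_mult_s[OF iZ' iZ gia gib ga gb] WZ WZ' by simp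
    also have "M' * g b = - (?gi a * M)"
    proof -
      have "M' * g b = - (?gi a * M * ?gi b * g b)" unfolding M'_def using gb gia gib M by simp
      also have "?gi a * M * ?gi b * g b = (?gi a * M) * (?gi b * g b)" using gb gia gib M by (simp add: massoc)
      also have "\<dots> = ?gi a * M" using inv M gia by simp
      finally show ?thesis .
    qed
    also have "?gi a * M + - (?gi a * M) = 0\<^sub>m na nb"
    proof -
      have cc: "?gi a * M \<in> carrier_mat na nb" using M gia by simp
      show ?thesis by (rule eq_matI) (use cc M gia in simp_all)
    qed
    finally show "R * (Z' * Z) * s = 0\<^sub>m na nb" .
  qed
  have E1: "ext g Z \<in> End_Q Q'" using ext_End[OF HEnd[OF g]] iZ by blast
  have E2: "ext ?gi Z' \<in> End_Q Q'" using ext_End[OF giE] iZ' by blast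
  have "\<forall>v\<in>verts Q'. ext g Z v * ext ?gi Z' v = 1\<^sub>m (dim Q' v) \<and> ext ?gi Z' v * ext g Z v = 1\<^sub>m (dim Q' v)"
  proof
    fix v assume v: "v \<in> verts Q'"
    show "ext g Z v * ext ?gi Z' v = 1\<^sub>m (dim Q' v) \<and> ext ?gi Z' v * ext g Z v = 1\<^sub>m (dim Q' v)"
    proof (cases "v = c")
      case True thus ?thesis using ZZ' Z'Z by (simp add: ext_c)
    next
      case False hence vQ: "v \<in> verts Q" using v vQ' by simp
      thus ?thesis using Aut_inv(2,3)[OF gA vQ] dimQ' by (simp add: ext_v)
    qed
  qed
  thus ?thesis unfolding Z_def[symmetric] Aut_Q_def using E1 E2 by blast
qed


definition "Lg g = {g' \<in> Aut_Q Q'. restr_to Q g' = g}"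
definition "FF = {Y \<in> End_Q Q'. restr_to Q Y = X}"

lemma Hext: "g \<in> H \<Longrightarrow> g \<in> extensional (verts Q)" using HEnd unfolding End_Q_def by auto

lemma lift_in: "g \<in> H \<Longrightarrow> M \<in> carrier_mat na nb \<Longrightarrow> ext g (Th (g a) M (g b)) \<in> Lg g"
  unfolding Lg_def using lift_exists restr_ext[OF Hext] by blast

lemma lift_count: assumes g: "g \<in> H" shows "card (Lg g) = card (carrier_mat na nb :: 'a mat set)"
proof (rule bij_betw_same_card[of "\<lambda>g'. R * g' c * s"])
  have ga: "g a \<in> carrier_mat na na" and gb: "g b \<in> carrier_mat nb nb" using gcar g by auto
  show "bij_betw (\<lambda>g'. R * g' c * s) (Lg g) (carrier_mat na nb)"
  proof (rule bij_betw_byWitness[where f' = "\<lambda>M. ext g (Th (g a) M (g b))"])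
    show "\<forall>g'\<in>Lg g. ext g (Th (g a) (R * g' c * s) (g b)) = g'"
    proof
      fix g' assume "g' \<in> Lg g"
      hence l: "g' \<in> Aut_Q Q'" "restr_to Q g' = g" unfolding Lg_def by auto
      show "ext g (Th (g a) (R * g' c * s) (g b)) = g'"
        using intw_rep[OF ga gb lift_props(2)[OF l]] lift_props(1)[OF l] by simp
    qed
    show "\<forall>M\<in>carrier_mat na nb. R * ext g (Th (g a) M (g b)) c * s = M"
      using R_Th_s[OF ga _ gb] by (simp add: ext_c)
    show "(\<lambda>g'. R * g' c * s) ` Lg g \<subseteq> carrier_mat na nb"
    proof
      fix x assume "x \<in> (\<lambda>g'. R * g' c * s) ` Lg g"
      then obtain g' where g': "g' \<in> Lg g" "x = R * g' c * s" by blast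
      hence l: "g' \<in> Aut_Q Q'" "restr_to Q g' = g" unfolding Lg_def by auto
      have gc: "g' c \<in> carrier_mat n n" using lift_props(2)[OF l] unfolding intw_def by auto
      show "x \<in> carrier_mat na nb" unfolding g'(2) by (rule mult_carrier_mat[OF mult_carrier_mat[OF R gc] s])
    qed
    show "(\<lambda>M. ext g (Th (g a) M (g b))) ` carrier_mat na nb \<subseteq> Lg g"
      using lift_in[OF g] by blast
  qed
qed

lemma FF_props: assumes "Y \<in> FF" shows "Y = ext X (Y c)" "intw (X a) (X b) (Y c)"
proof -
  have E: "Y \<in> End_Q Q'" and r: "restr_to Q Y = X" using assms unfolding FF_def by auto
  show "Y = ext X (Y c)" using ext_restr[OF E] r by simp
  have "restr_to Q Y a = Y a" "restr_to Q Y b = Y b" using a b unfolding restr_to_def by auto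
  thus "intw (X a) (X b) (Y c)" using End_c[OF E] r by simp
qed

lemma FF_in: "intw (X a) (X b) Z \<Longrightarrow> ext X Z \<in> FF"
  unfolding FF_def using ext_End[OF X] restr_ext X unfolding End_Q_def by auto

lemma fix_char:
  assumes g: "g \<in> H" and g': "g' \<in> Lg g" and Y: "Y \<in> FF"
  shows "conj_act Q' g' Y = Y \<longleftrightarrow> g' c * Y c = Y c * g' c"
proof -
  have l: "g' \<in> Aut_Q Q'" "restr_to Q g' = g" using g' unfolding Lg_def by auto
  have YE: "Y \<in> End_Q Q'" using Y unfolding FF_def by auto
  have cQ': "c \<in> verts Q'" using vQ' by simp
  have cc: "g' c \<in> carrier_mat n n" "Y c \<in> carrier_mat n n" "matinv (g' c) \<in> carrier_mat n n"
    using End_carrier[OF Aut_End[OF l(1)] cQ'] End_carrier[OF YE cQ'] End_carrier[OF Aut_inv(1)[OF l(1)] cQ']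
    unfolding Aut_inv(4)[OF l(1) cQ'] by auto
  have eqc: "g' c * Y c * matinv (g' c) = Y c \<longleftrightarrow> g' c * Y c = Y c * g' c"
    using conj_comm[OF cc(1) cc(3) cc(2)] Aut_inv(2,3,4)[OF l(1) cQ'] by simp
  show ?thesis
  proof
    assume "conj_act Q' g' Y = Y"
    hence "conj_act Q' g' Y c = Y c" by simp
    thus "g' c * Y c = Y c * g' c" using eqc cQ' unfolding conj_act_def by simp
  next
    assume h: "g' c * Y c = Y c * g' c"
    show "conj_act Q' g' Y = Y"
    proof
      fix v show "conj_act Q' g' Y v = Y v"
      proof (cases "v \<in> verts Q'")
        case False thus ?thesis using End_ext[OF YE False] unfolding conj_act_def by simp
      next
        case True
        show ?thesis
        proof (cases "v = c")
          case True thus ?thesis using eqc h cQ' unfolding conj_act_def by simp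
        next
          case False
          hence vQ: "v \<in> verts Q" using \<open>v \<in> verts Q'\<close> vQ' by simp
          have "g' v = g v" "Y v = X v" using l(2) FF_props(1)[OF Y] vQ ext_v
            unfolding restr_to_def by (metis restrict_apply')+
          thus ?thesis using Hconj[OF g vQ] \<open>v \<in> verts Q'\<close> unfolding conj_act_def by simp
        qed
      qed
    qed
  qed
qed


lemma comm_equiv:
  assumes g: "g \<in> H" and iZ: "intw (g a) (g b) Z" and iY: "intw (X a) (X b) Y"
  shows "Z * Y = Y * Z \<longleftrightarrow> g a * (R * Y * s) + (R * Z * s) * X b = X a * (R * Z * s) + (R * Y * s) * g b"
proof -
  have ga: "g a \<in> carrier_mat na na" and gb: "g b \<in> carrier_mat nb nb" using gcar g by auto
  have Xa: "X a \<in> carrier_mat na na" and Xb: "X b \<in> carrier_mat nb nb" using Xcar by auto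
  have e1: "R * (Z * Y) * s = g a * (R * Y * s) + (R * Z * s) * X b" by (rule R_mult_s[OF iZ iY ga gb Xa Xb])
  have e2: "R * (Y * Z) * s = X a * (R * Z * s) + (R * Y * s) * g b" by (rule R_mult_s[OF iY iZ Xa Xb ga gb])
  have i1: "intw (g a * X a) (g b * X b) (Z * Y)" by (rule intw_mult[OF iZ iY ga gb Xa Xb])
  have i2: "intw (g a * X a) (g b * X b) (Y * Z)"
    using intw_mult[OF iY iZ Xa Xb ga gb] Hcomm[OF g a] Hcomm[OF g b] by simp
  have c1: "g a * X a \<in> carrier_mat na na" "g b * X b \<in> carrier_mat nb nb" using ga gb Xa Xb by auto
  show ?thesis
  proof
    assume "Z * Y = Y * Z" thus "g a * (R * Y * s) + (R * Z * s) * X b = X a * (R * Z * s) + (R * Y * s) * g b"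
      using e1 e2 by simp
  next
    assume h: "g a * (R * Y * s) + (R * Z * s) * X b = X a * (R * Z * s) + (R * Y * s) * g b"
    have "Z * Y = Th (g a * X a) (R * (Z * Y) * s) (g b * X b)" by (rule intw_rep[OF c1 i1])
    also have "R * (Z * Y) * s = R * (Y * Z) * s" using e1 e2 h by simp
    also have "Th (g a * X a) (R * (Y * Z) * s) (g b * X b) = Y * Z" by (rule intw_rep[OF c1 i2, symmetric])
    finally show "Z * Y = Y * Z" .
  qed
qed

lemma pair_count:
  assumes g: "g \<in> H"
  shows "card (SIGMA g':Lg g. {Y\<in>FF. conj_act Q' g' Y = Y}) =
    card {(T,M). T \<in> carrier_mat na nb \<and> M \<in> carrier_mat na nb \<and> g a * T + M * X b = X a * M + T * g b}"
proof (rule bij_betw_same_card[of "\<lambda>(g',Y). (R * Y c * s, R * g' c * s)"])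
  have ga: "g a \<in> carrier_mat na na" and gb: "g b \<in> carrier_mat nb nb" using gcar g by auto
  have Xa: "X a \<in> carrier_mat na na" and Xb: "X b \<in> carrier_mat nb nb" using Xcar by auto
  let ?S = "SIGMA g':Lg g. {Y\<in>FF. conj_act Q' g' Y = Y}"
  let ?K = "{(T,M). T \<in> carrier_mat na nb \<and> M \<in> carrier_mat na nb \<and> g a * T + M * X b = X a * M + T * g b}"
  have Lp: "g' \<in> Aut_Q Q' \<and> restr_to Q g' = g" if "g' \<in> Lg g" for g' using that unfolding Lg_def by auto
  show "bij_betw (\<lambda>(g',Y). (R * Y c * s, R * g' c * s)) ?S ?K"
  proof (rule bij_betw_byWitness[where f' = "\<lambda>(T,M). (ext g (Th (g a) M (g b)), ext X (Th (X a) T (X b)))"])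
    show "\<forall>x\<in>?S. (\<lambda>(T,M). (ext g (Th (g a) M (g b)), ext X (Th (X a) T (X b)))) ((\<lambda>(g',Y). (R * Y c * s, R * g' c * s)) x) = x"
    proof
      fix x assume "x \<in> ?S"
      then obtain g' Y where x: "x = (g',Y)" "g' \<in> Lg g" "Y \<in> FF" by auto
      have l: "g' \<in> Aut_Q Q'" "restr_to Q g' = g" using Lp[OF x(2)] by auto
      have 1: "ext g (Th (g a) (R * g' c * s) (g b)) = g'"
        using intw_rep[OF ga gb lift_props(2)[OF l]] lift_props(1)[OF l] by simp
      have 2: "ext X (Th (X a) (R * Y c * s) (X b)) = Y"
        using intw_rep[OF Xa Xb FF_props(2)[OF x(3)]] FF_props(1)[OF x(3)] by simp
      show "(\<lambda>(T,M). (ext g (Th (g a) M (g b)), ext X (Th (X a) T (X b)))) ((\<lambda>(g',Y). (R * Y c * s, R * g' c * s)) x) = x"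
        using 1 2 x(1) by simp
    qed
    show "\<forall>y\<in>?K. (\<lambda>(g',Y). (R * Y c * s, R * g' c * s)) ((\<lambda>(T,M). (ext g (Th (g a) M (g b)), ext X (Th (X a) T (X b)))) y) = y"
    proof
      fix y assume "y \<in> ?K"
      then obtain T M where y: "y = (T,M)" "T \<in> carrier_mat na nb" "M \<in> carrier_mat na nb" by auto
      show "(\<lambda>(g',Y). (R * Y c * s, R * g' c * s)) ((\<lambda>(T,M). (ext g (Th (g a) M (g b)), ext X (Th (X a) T (X b)))) y) = y"
        using y R_Th_s[OF ga y(3) gb] R_Th_s[OF Xa y(2) Xb] by (simp add: ext_c)
    qed
    show "(\<lambda>(g',Y). (R * Y c * s, R * g' c * s)) ` ?S \<subseteq> ?K"
    proof
      fix z assume "z \<in> (\<lambda>(g',Y). (R * Y c * s, R * g' c * s)) ` ?S"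
      then obtain g' Y where x: "z = (R * Y c * s, R * g' c * s)" "g' \<in> Lg g" "Y \<in> FF" "conj_act Q' g' Y = Y" by auto
      have l: "g' \<in> Aut_Q Q'" "restr_to Q g' = g" using Lp[OF x(2)] by auto
      have iZ: "intw (g a) (g b) (g' c)" by (rule lift_props(2)[OF l])
      have iY: "intw (X a) (X b) (Y c)" by (rule FF_props(2)[OF x(3)])
      have cm: "g' c * Y c = Y c * g' c" using fix_char[OF g x(2) x(3)] x(4) by simp
      have cz: "g' c \<in> carrier_mat n n" "Y c \<in> carrier_mat n n" using iZ iY unfolding intw_def by auto
      have "R * Y c * s \<in> carrier_mat na nb" "R * g' c * s \<in> carrier_mat na nb"
        by (rule mult_carrier_mat[OF mult_carrier_mat[OF R cz(2)] s]) (rule mult_carrier_mat[OF mult_carrier_mat[OF R cz(1)] s])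
      thus "z \<in> ?K" using comm_equiv[OF g iZ iY] cm x(1) by simp
    qed
    show "(\<lambda>(T,M). (ext g (Th (g a) M (g b)), ext X (Th (X a) T (X b)))) ` ?K \<subseteq> ?S"
    proof
      fix z assume "z \<in> (\<lambda>(T,M). (ext g (Th (g a) M (g b)), ext X (Th (X a) T (X b)))) ` ?K"
      then obtain T M where y: "z = (ext g (Th (g a) M (g b)), ext X (Th (X a) T (X b)))"
        "T \<in> carrier_mat na nb" "M \<in> carrier_mat na nb" "g a * T + M * X b = X a * M + T * g b" by auto
      have g'L: "ext g (Th (g a) M (g b)) \<in> Lg g" by (rule lift_in[OF g y(3)])
      have iZ: "intw (g a) (g b) (Th (g a) M (g b))" by (rule intw_Th[OF ga y(3) gb])
      have iY: "intw (X a) (X b) (Th (X a) T (X b))" by (rule intw_Th[OF Xa y(2) Xb])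
      have YF: "ext X (Th (X a) T (X b)) \<in> FF" by (rule FF_in[OF iY])
      have "Th (g a) M (g b) * Th (X a) T (X b) = Th (X a) T (X b) * Th (g a) M (g b)"
        using comm_equiv[OF g iZ iY] y(4) R_Th_s[OF ga y(3) gb] R_Th_s[OF Xa y(2) Xb] by simp
      hence "conj_act Q' (ext g (Th (g a) M (g b))) (ext X (Th (X a) T (X b))) = ext X (Th (X a) T (X b))"
        using fix_char[OF g g'L YF] by (simp add: ext_c)
      thus "z \<in> ?S" using y(1) g'L YF by simp
    qed
  qed
qed


lemma vQsub: "verts Q \<subseteq> verts Q'" using vQ' by auto

lemma restr_mult: "restr_to Q (tuple_mult Q' g h) = tuple_mult Q (restr_to Q g) (restr_to Q h)"
  unfolding restr_to_def tuple_mult_def using vQsub by (intro ext) auto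

lemma restr_one: "restr_to Q (tuple_one Q') = tuple_one Q"
  unfolding restr_to_def tuple_one_def using vQsub dimQ' by (intro ext) auto

lemma restr_inv: "restr_to Q (tuple_inv Q' g) = tuple_inv Q (restr_to Q g)"
  unfolding restr_to_def tuple_inv_def using vQsub by (intro ext) auto

lemma restr_conj: "restr_to Q (conj_act Q' g Y) = conj_act Q (restr_to Q g) (restr_to Q Y)"
  unfolding restr_to_def conj_act_def using vQsub by (intro ext) auto

lemma H_one: "tuple_one Q \<in> H" and H_mult: "g \<in> H \<Longrightarrow> h \<in> H \<Longrightarrow> tuple_mult Q g h \<in> H"
  and H_inv: "g \<in> H \<Longrightarrow> tuple_inv Q g \<in> H"
  using sub unfolding is_subgroup_Aut_def by auto

lemma finH: "finite H"
  using finite_End[of Q] Q HEnd unfolding is_quiver_rep_def by (meson finite_subset subsetI)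

lemma finEnd': "finite (End_Q Q')"
  using finite_End[of Q'] Q' unfolding is_quiver_rep_def by blast

abbreviation "H' \<equiv> lift_group Q' Q H"

lemma H'_Aut: "g \<in> H' \<Longrightarrow> g \<in> Aut_Q Q'" unfolding lift_group_def by auto

lemma burn1: "num_orbits H' (conj_act Q') FF * card H' = (\<Sum>g\<in>H'. card {Y\<in>FF. conj_act Q' g Y = Y})"
proof (rule burnside_gen[where mult = "tuple_mult Q'" and one = "tuple_one Q'"])
  show "finite H'" by (rule finite_subset[OF _ finEnd']) (auto intro: Aut_End H'_Aut)
  show "finite FF" using finEnd' unfolding FF_def by simp
  show "tuple_one Q' \<in> H'" unfolding lift_group_def using one_Aut[OF Q'] restr_one H_one by simp
  show "\<And>g h. g \<in> H' \<Longrightarrow> h \<in> H' \<Longrightarrow> tuple_mult Q' g h \<in> H'"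
    unfolding lift_group_def using Aut_mult[OF Q'] restr_mult H_mult by simp
  show "\<And>g h k. g \<in> H' \<Longrightarrow> h \<in> H' \<Longrightarrow> k \<in> H' \<Longrightarrow> tuple_mult Q' (tuple_mult Q' g h) k = tuple_mult Q' g (tuple_mult Q' h k)"
    using tuple_assoc H'_Aut Aut_End by blast
  show "\<And>g. g \<in> H' \<Longrightarrow> tuple_mult Q' (tuple_one Q') g = g" using tuple_lone H'_Aut Aut_End by blast
  show "\<And>g. g \<in> H' \<Longrightarrow> \<exists>h\<in>H'. tuple_mult Q' h g = tuple_one Q'"
  proof -
    fix g assume g: "g \<in> H'"
    have "tuple_inv Q' g \<in> Aut_Q Q'" by (rule Aut_inv_Aut[OF H'_Aut[OF g]])
    moreover have "restr_to Q (tuple_inv Q' g) \<in> H" using g restr_inv H_inv unfolding lift_group_def by simp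
    ultimately have "tuple_inv Q' g \<in> H'" unfolding lift_group_def by simp
    thus "\<exists>h\<in>H'. tuple_mult Q' h g = tuple_one Q'" using tuple_linv[OF H'_Aut[OF g]] by blast
  qed
  show "\<And>x. x \<in> FF \<Longrightarrow> conj_act Q' (tuple_one Q') x = x" using conj_one unfolding FF_def by blast
  show "\<And>g h x. g \<in> H' \<Longrightarrow> h \<in> H' \<Longrightarrow> x \<in> FF \<Longrightarrow> conj_act Q' (tuple_mult Q' g h) x = conj_act Q' g (conj_act Q' h x)"
    using conj_mult H'_Aut unfolding FF_def by blast
  show "\<And>g x. g \<in> H' \<Longrightarrow> x \<in> FF \<Longrightarrow> conj_act Q' g x \<in> FF"
  proof -
    fix g x assume g: "g \<in> H'" and x: "x \<in> FF"
    have "conj_act Q' g x \<in> End_Q Q'" using conj_End[OF Q' H'_Aut[OF g]] x unfolding FF_def by blast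
    moreover have "restr_to Q (conj_act Q' g x) = X"
      using restr_conj Hfix g x unfolding lift_group_def FF_def by simp
    ultimately show "conj_act Q' g x \<in> FF" unfolding FF_def by simp
  qed
qed

definition "actI = (\<lambda>g R. g b * R * matinv (g a))"
abbreviation "II \<equiv> intertw na nb (X a) (X b)"

lemma gainv: assumes g: "g \<in> H"
  shows "matinv (g a) \<in> carrier_mat na na" "g a * matinv (g a) = 1\<^sub>m na" "matinv (g a) * g a = 1\<^sub>m na"
  using End_carrier[OF Aut_inv(1)[OF HAut[OF g]] a] Aut_inv(2,3)[OF HAut[OF g] a]
  unfolding Aut_inv(4)[OF HAut[OF g] a] by auto

lemma actI_closed: assumes g: "g \<in> H" and Rm: "Rm \<in> II" shows "actI g Rm \<in> II"
proof -
  have ga: "g a \<in> carrier_mat na na" and gb: "g b \<in> carrier_mat nb nb" using gcar g by auto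
  have Xa: "X a \<in> carrier_mat na na" and Xb: "X b \<in> carrier_mat nb nb" using Xcar by auto
  have Rc: "Rm \<in> carrier_mat nb na" and RX: "Rm * X a = X b * Rm" using Rm unfolding intertw_def by auto
  note gi = gainv[OF g]
  have cXa: "g a * X a = X a * g a" by (rule Hcomm[OF g a])
  have cXb: "g b * X b = X b * g b" by (rule Hcomm[OF g b])
  have ciXa: "matinv (g a) * X a = X a * matinv (g a)"
  proof -
    have "matinv (g a) * X a = matinv (g a) * X a * (g a * matinv (g a))" using gi Xa by simp
    also have "\<dots> = matinv (g a) * (X a * g a) * matinv (g a)" using gi(1) Xa ga by (simp add: massoc)
    also have "\<dots> = matinv (g a) * (g a * X a) * matinv (g a)" by (simp only: cXa)
    also have "\<dots> = (matinv (g a) * g a) * X a * matinv (g a)" using gi(1) Xa ga by (simp add: massoc)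
    also have "\<dots> = X a * matinv (g a)" using gi Xa by simp
    finally show ?thesis .
  qed
  have "g b * Rm * matinv (g a) * X a = g b * Rm * (matinv (g a) * X a)" using gb Rc gi Xa by (simp add: massoc)
  also have "\<dots> = g b * (Rm * X a) * matinv (g a)" using gb Rc gi Xa by (simp add: ciXa massoc)
  also have "\<dots> = (g b * X b) * Rm * matinv (g a)" using gb Rc gi Xb by (simp add: RX massoc)
  also have "\<dots> = X b * (g b * Rm * matinv (g a))" using gb Rc gi Xb by (simp add: cXb massoc)
  finally have "g b * Rm * matinv (g a) * X a = X b * (g b * Rm * matinv (g a))" .
  moreover have "g b * Rm * matinv (g a) \<in> carrier_mat nb na" using gb Rc gi by auto
  ultimately show ?thesis unfolding actI_def intertw_def by simp
qed

lemma burn2: "num_orbits H actI II * card H = (\<Sum>g\<in>H. card {Rm\<in>II. actI g Rm = Rm})"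
proof (rule burnside_gen[where mult = "tuple_mult Q" and one = "tuple_one Q"])
  show "finite H" by (rule finH)
  show "finite II" unfolding intertw_def by (rule finite_subset[OF _ finite_carrier_mat]) auto
  show "tuple_one Q \<in> H" by (rule H_one)
  show "\<And>g h. g \<in> H \<Longrightarrow> h \<in> H \<Longrightarrow> tuple_mult Q g h \<in> H" by (rule H_mult)
  show "\<And>g h k. g \<in> H \<Longrightarrow> h \<in> H \<Longrightarrow> k \<in> H \<Longrightarrow> tuple_mult Q (tuple_mult Q g h) k = tuple_mult Q g (tuple_mult Q h k)"
    using tuple_assoc HEnd by blast
  show "\<And>g. g \<in> H \<Longrightarrow> tuple_mult Q (tuple_one Q) g = g" using tuple_lone HEnd by blast
  show "\<And>g. g \<in> H \<Longrightarrow> \<exists>h\<in>H. tuple_mult Q h g = tuple_one Q" using tuple_linv HAut H_inv by blast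
  show "\<And>x. x \<in> II \<Longrightarrow> actI (tuple_one Q) x = x"
  proof -
    fix x assume "x \<in> II"
    hence xc: "x \<in> carrier_mat nb na" unfolding intertw_def by auto
    have m: "matinv (1\<^sub>m na) = (1\<^sub>m na :: 'a mat)" by (rule matinv_eq) auto
    show "actI (tuple_one Q) x = x" unfolding actI_def tuple_one_def using a b xc m by simp
  qed
  show "\<And>g h x. g \<in> H \<Longrightarrow> h \<in> H \<Longrightarrow> x \<in> II \<Longrightarrow> actI (tuple_mult Q g h) x = actI g (actI h x)"
  proof -
    fix g h x assume g: "g \<in> H" and h: "h \<in> H" and x: "x \<in> II"
    hence xc: "x \<in> carrier_mat nb na" unfolding intertw_def by auto
    have m: "matinv (g a * h a) = matinv (h a) * matinv (g a)" by (rule matinv_mult[OF HAut[OF g] HAut[OF h] a])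
    show "actI (tuple_mult Q g h) x = actI g (actI h x)"
      unfolding actI_def tuple_mult_def using a b m xc gcar[OF g] gcar[OF h] gainv(1)[OF g] gainv(1)[OF h]
      by (simp add: massoc)
  qed
  show "\<And>g x. g \<in> H \<Longrightarrow> x \<in> II \<Longrightarrow> actI g x \<in> II" by (rule actI_closed)
qed

lemma fixI: assumes g: "g \<in> H"
  shows "{Rm\<in>II. actI g Rm = Rm} = {S \<in> carrier_mat nb na. S * g a = g b * S \<and> X b * S = S * X a}"
proof -
  have "actI g Rm = Rm \<longleftrightarrow> g b * Rm = Rm * g a" if "Rm \<in> carrier_mat nb na" for Rm
    unfolding actI_def using conj_comm2[OF gcar(2)[OF g] gcar(1)[OF g] gainv(1)[OF g] that gainv(2,3)[OF g]] .
  thus ?thesis unfolding intertw_def by auto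
qed

lemma main_eq: "num_orbits H' (conj_act Q') FF = num_orbits H actI II"
proof -
  let ?Mab = "carrier_mat na nb :: 'a mat set"
  let ?F = "\<lambda>g'. card {Y\<in>FF. conj_act Q' g' Y = Y}"
  have finH': "finite H'" by (rule finite_subset[OF _ finEnd']) (auto intro: Aut_End H'_Aut)
  have finL: "finite (Lg g)" for g by (rule finite_subset[OF _ finEnd']) (auto simp: Lg_def intro: Aut_End)
  have finFF: "finite FF" using finEnd' unfolding FF_def by simp
  have grp: "(\<Sum>g\<in>H'. f g) = (\<Sum>g\<in>H. \<Sum>g'\<in>Lg g. f g')" for f :: "_ \<Rightarrow> nat"
  proof -
    have "(\<Sum>g\<in>H. \<Sum>g'\<in>{x \<in> H'. restr_to Q x = g}. f g') = (\<Sum>g\<in>H'. f g)"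
      by (rule sum.group[OF finH' finH]) (auto simp: lift_group_def)
    moreover have "{x \<in> H'. restr_to Q x = g} = Lg g" if "g \<in> H" for g
      using that unfolding lift_group_def Lg_def by auto
    ultimately show ?thesis by simp
  qed
  have s1: "(\<Sum>g'\<in>Lg g. ?F g') = card {Rm\<in>II. actI g Rm = Rm} * card ?Mab" if g: "g \<in> H" for g
  proof -
    have "(\<Sum>g'\<in>Lg g. ?F g') = card (SIGMA g':Lg g. {Y\<in>FF. conj_act Q' g' Y = Y})"
      using finL finFF by (simp add: card_SigmaI)
    also have "\<dots> = card {(T,M). T \<in> ?Mab \<and> M \<in> ?Mab \<and> g a * T + M * X b = X a * M + T * g b}"
      by (rule pair_count[OF g])
    also have "\<dots> = card {S \<in> carrier_mat nb na. S * g a = g b * S \<and> X b * S = S * X a} * card ?Mab"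
      by (rule kernel_duality[OF gcar(1)[OF g] Xcar(1) gcar(2)[OF g] Xcar(2)])
    also have "\<dots> = card {Rm\<in>II. actI g Rm = Rm} * card ?Mab" using fixI[OF g] by simp
    finally show ?thesis .
  qed
  have cH': "card H' = card H * card ?Mab"
  proof -
    have "card H' = (\<Sum>g\<in>H'. 1)" by simp
    also have "\<dots> = (\<Sum>g\<in>H. \<Sum>g'\<in>Lg g. 1)" by (rule grp)
    also have "\<dots> = (\<Sum>g\<in>H. card ?Mab)" using lift_count by simp
    finally show ?thesis by simp
  qed
  have "num_orbits H' (conj_act Q') FF * (card H * card ?Mab) = (\<Sum>g\<in>H'. ?F g)" using burn1 cH' by simp
  also have "\<dots> = (\<Sum>g\<in>H. \<Sum>g'\<in>Lg g. ?F g')" by (rule grp)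
  also have "\<dots> = (\<Sum>g\<in>H. card {Rm\<in>II. actI g Rm = Rm} * card ?Mab)" using s1 by simp
  also have "\<dots> = num_orbits H actI II * card H * card ?Mab" using burn2 by (simp add: sum_distrib_right)
  finally have "num_orbits H' (conj_act Q') FF * (card H * card ?Mab) = num_orbits H actI II * (card H * card ?Mab)"
    by (simp add: mult.assoc)
  moreover have "card H * card ?Mab > 0"
    using finH H_one card_carrier_pos[of na nb, where 'a = 'a] card_gt_0_iff by fastforce
  ultimately show ?thesis by simp
qed

end

theorem mainTheorem9:
  fixes Q Q' :: "('v, 'e, 'a::{finite, field}) quiver_rep"
    and a b :: 'v and X :: "'v \<Rightarrow> 'a mat" and H :: "('v \<Rightarrow> 'a mat) set"
  assumes "is_quiver_rep Q"
    and "a \<in> verts Q" and "b \<in> verts Q"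
    and "is_quiver_rep Q'" and "is_Omega Q a b Q'"
    and "X \<in> End_Q Q"
    and "is_subgroup_Aut H Q"
    and "\<forall>g\<in>H. conj_act Q g X = X"
  shows "num_orbits (lift_group Q' Q H) (conj_act Q')
           {Y \<in> End_Q Q'. restr_to Q Y = X}
       = num_orbits H (\<lambda>g R. g b * R * matinv (g a)) (intertw (dim Q a) (dim Q b) (X a) (X b))"
proof -
  obtain c e1 e2 where om:
     "c \<notin> verts Q" "e1 \<notin> arrs Q" "e2 \<notin> arrs Q" "e1 \<noteq> e2"
     "verts Q' = insert c (verts Q)" "arrs Q' = arrs Q \<union> {e1, e2}"
     "\<forall>e\<in>arrs Q. src Q' e = src Q e \<and> tgt Q' e = tgt Q e \<and> amap Q' e = amap Q e"
     "\<forall>v\<in>verts Q. dim Q' v = dim Q v"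
     "dim Q' c = dim Q a + dim Q b"
     "src Q' e1 = a" "tgt Q' e1 = c" "src Q' e2 = c" "tgt Q' e2 = b"
     "amap Q' e1 \<in> carrier_mat (dim Q' c) (dim Q a)"
     "amap Q' e2 \<in> carrier_mat (dim Q b) (dim Q' c)"
     "\<forall>u\<in>carrier_vec (dim Q a). amap Q' e1 *\<^sub>v u = 0\<^sub>v (dim Q' c) \<longrightarrow> u = 0\<^sub>v (dim Q a)"
     "\<forall>w\<in>carrier_vec (dim Q b). \<exists>v\<in>carrier_vec (dim Q' c). amap Q' e2 *\<^sub>v v = w"
     "\<forall>v\<in>carrier_vec (dim Q' c). amap Q' e2 *\<^sub>v v = 0\<^sub>v (dim Q b) \<longleftrightarrow>
          (\<exists>u\<in>carrier_vec (dim Q a). v = amap Q' e1 *\<^sub>v u)"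
    using assms(5) unfolding is_Omega_def by blast
  obtain s R where sR: "ses (dim Q a) (dim Q b) (dim Q' c) (amap Q' e1) (amap Q' e2) s R"
    using ses_exists[OF om(14) om(15) om(16) om(17) om(18)] by blast
  have oc: "omega_ctx Q Q' a b c e1 e2 s R X H"
    unfolding omega_ctx_def omega_ctx_axioms_def
    using sR assms(1,2,3,4,6,7,8) om(1-8,10-13) by blast
  interpret omega_ctx Q Q' a b c e1 e2 s R X H by (rule oc)
  show ?thesis using main_eq unfolding FF_def actI_def by simp
qed
end
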